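(* For every fixed integer $k\ge3$, the approximation ratio of $k$-Opt for \textsc{Metric TSP} satisfies $$\alpha_k(n)=\Omega\!\left(\frac{n}{\mathrm{ex}^{-1}(n,2k)}\right)\qquad(n\to\infty).$$
   Context: A \textsc{Metric TSP} instance on $n$ vertices is the complete graph $K_n$ with edge costs $c:E(K_n)\to\mathbb{R}_{\ge0}$ satisfying the triangle inequality. A tour is a Hamiltonian cycle, with length $c(T)=\sum_{e\in T}c(e)$; $\mathrm{OPT}(I)$ is the minimum tour length. A $k$-move replaces at most $k$ edges of a tour by other edges so that the result is again a tour; it is improving if the new tour is strictly shorter. A tour is $k$-optimal if no improving $k$-move exists. $\alpha_k(n)$ is the supremum of $c(T)/\mathrm{OPT}(I)$ over all \textsc{Metric TSP} instances $I$ on $n$ vertices with $\mathrm{OPT}(I)>0$ and all $k$-optimal tours $T$ of $I$. The girth of a graph is the length of its shortest cycle ($\infty$ if none). $\mathrm{ex}^{-1}(m,2k)$ is the minimum number of vertices of a simple graph with $m$ edges and girth at least $2k$. *)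

theory Defs
  imports Complex_Main "HOL-Library.Extended_Real"
begin

definition edges_Kn :: "nat \<Rightarrow> nat set set" where
  "edges_Kn n = {{u, v} | u v. u < n \<and> v < n \<and> u \<noteq> v}"

definition metric_inst :: "nat \<Rightarrow> (nat set \<Rightarrow> real) \<Rightarrow> bool" where
  "metric_inst n c \<longleftrightarrow>
     (\<forall>e\<in>edges_Kn n. c e \<ge> 0) \<and>
     (\<forall>u v w. u < n \<and> v < n \<and> w < n \<and> u \<noteq> v \<and> v \<noteq> w \<and> u \<noteq> w
        \<longrightarrow> c {u, w} \<le> c {u, v} + c {v, w})"

definition is_tour :: "nat \<Rightarrow> nat set set \<Rightarrow> bool" where
  "is_tour n T \<longleftrightarrow> 3 \<le> n \<and>
     (\<exists>p. bij_betw p {..<n} {..<n} \<and> T = (\<lambda>i. {p i, p (Suc i mod n)}) ` {..<n})"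

definition tour_len :: "(nat set \<Rightarrow> real) \<Rightarrow> nat set set \<Rightarrow> real" where
  "tour_len c T = (\<Sum>e\<in>T. c e)"

definition OPT :: "nat \<Rightarrow> (nat set \<Rightarrow> real) \<Rightarrow> real" where
  "OPT n c = Min (tour_len c ` {T. is_tour n T})"

definition k_move :: "nat \<Rightarrow> nat \<Rightarrow> nat set set \<Rightarrow> nat set set \<Rightarrow> bool" where
  "k_move k n T T' \<longleftrightarrow> is_tour n T \<and> is_tour n T' \<and> card (T - T') \<le> k"

definition k_optimal :: "nat \<Rightarrow> nat \<Rightarrow> (nat set \<Rightarrow> real) \<Rightarrow> nat set set \<Rightarrow> bool" where
  "k_optimal k n c T \<longleftrightarrow> is_tour n T \<and>
     \<not> (\<exists>T'. k_move k n T T' \<and> tour_len c T' < tour_len c T)"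

definition alpha :: "nat \<Rightarrow> nat \<Rightarrow> ereal" where
  "alpha k n = (SUP cT \<in> {(c, T). metric_inst n c \<and> OPT n c > 0 \<and> k_optimal k n c T}.
                   ereal (tour_len (fst cT) (snd cT) / OPT n (fst cT)))"

definition has_cycle_len :: "nat set set \<Rightarrow> nat \<Rightarrow> bool" where
  "has_cycle_len E l \<longleftrightarrow> 3 \<le> l \<and>
     (\<exists>v. inj_on v {..<l} \<and> (\<forall>i<l. {v i, v (Suc i mod l)} \<in> E))"

definition girth_ge :: "nat set set \<Rightarrow> nat \<Rightarrow> bool" where
  "girth_ge E g \<longleftrightarrow> (\<forall>l. l < g \<longrightarrow> \<not> has_cycle_len E l)"

definition exinv :: "nat \<Rightarrow> nat \<Rightarrow> nat" where
  "exinv m g = (LEAST N. \<exists>E. E \<subseteq> edges_Kn N \<and> card E = m \<and> girth_ge E g)"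

end

theory Submission
  imports Defs
begin

lemma cyc_edge_inj:
  assumes inj: "inj_on v {..<l}" and l3: "3 \<le> l"
  shows "inj_on (\<lambda>t. {v t, v (Suc t mod l)}) {..<l}"
proof (rule inj_onI)
  fix s t assume s: "s \<in> {..<l}" and t: "t \<in> {..<l}" and eq: "{v s, v (Suc s mod l)} = {v t, v (Suc t mod l)}"
  show "s = t"
  proof (rule ccontr)
    assume ne: "s \<noteq> t"
    have ss: "Suc s mod l \<in> {..<l}" "Suc t mod l \<in> {..<l}" using l3 by auto
    have "v s \<noteq> v t" using inj ne s t by (meson inj_on_eq_iff)
    hence a: "v s = v (Suc t mod l)" and b: "v t = v (Suc s mod l)" using eq by (auto simp: doubleton_eq_iff)
    have 1: "s = Suc t mod l" using inj_onD[OF inj a s ss(2)] .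
    have 2: "t = Suc s mod l" using inj_onD[OF inj b t ss(1)] .
    show False
    proof (cases "Suc t < l")
      case True
      hence st: "s = Suc t" using 1 by simp
      show False
      proof (cases "Suc s < l")
        case True hence "Suc s mod l = Suc s" by simp
        hence "t = Suc s" using 2 by simp
        thus False using st by linarith
      next
        case False hence "Suc s = l" using s by simp
        hence "Suc s mod l = 0" by simp
        hence "t = 0" using 2 by simp
        thus False using st \<open>Suc s = l\<close> l3 by linarith
      qed
    next
      case False hence "Suc t = l" using t by simp
      hence "Suc t mod l = 0" by simp
      hence "s = 0" using 1 by simp
      moreover have "Suc 0 mod l = 1" using l3 by simp
      ultimately have "t = 1" using 2 by simp
      thus False using \<open>Suc t = l\<close> l3 by linarith
    qed
  qed
qed

fun wseq :: "(nat \<Rightarrow> nat \<Rightarrow> nat) \<Rightarrow> nat \<Rightarrow> nat \<Rightarrow> nat \<Rightarrow> nat" where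
  "wseq nx a b 0 = a"
| "wseq nx a b (Suc 0) = b"
| "wseq nx a b (Suc (Suc n)) = nx (wseq nx a b n) (wseq nx a b (Suc n))"

lemma cycle_exists:
  fixes S :: "nat set set"
  assumes fin: "finite S" and ne: "S \<noteq> {}" and two: "\<forall>e\<in>S. card e = 2"
    and deg: "\<forall>e\<in>S. \<forall>x\<in>e. \<exists>e'\<in>S. x \<in> e' \<and> e' \<noteq> e"
  shows "\<exists>l. 3 \<le> l \<and> l \<le> card S \<and> has_cycle_len S l"
proof -
  obtain e0 where e0: "e0 \<in> S" using ne by auto
  have "card e0 = 2" using two e0 by blast
  then obtain a b where ab: "e0 = {a, b}" "a \<noteq> b" unfolding card_2_iff by blast
  define nx where "nx = (\<lambda>p q. SOME y. {q, y} \<in> S \<and> y \<noteq> p)"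
  have nxp: "{q, nx p q} \<in> S \<and> nx p q \<noteq> p" if pqS: "{p, q} \<in> S" for p q
  proof -
    have "\<exists>y. {q, y} \<in> S \<and> y \<noteq> p"
    proof -
      obtain e' where e': "e' \<in> S" "q \<in> e'" "e' \<noteq> {p,q}" using deg[rule_format, OF pqS, of q] by auto
      have "card e' = 2" using two e' by blast
      then obtain y z where yz: "e' = {y, z}" "y \<noteq> z" unfolding card_2_iff by blast
      show ?thesis
      proof (cases "q = y")
        case True thus ?thesis using yz e' by (intro exI[of _ z]) auto
      next
        case False hence "q = z" using yz e' by auto
        thus ?thesis using yz e' by (intro exI[of _ y]) (auto simp: insert_commute)
      qed
    qed
    thus ?thesis unfolding nx_def by (rule someI_ex)
  qed
  define x where "x = wseq nx a b"
  have P: "{x n, x (Suc n)} \<in> S \<and> x (Suc (Suc n)) \<noteq> x n" for n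
  proof (induction n)
    case 0 thus ?case using nxp[of a b] e0 ab by (simp add: x_def)
  next
    case (Suc n)
    have "{x (Suc n), x (Suc (Suc n))} \<in> S" using nxp[of "x n" "x (Suc n)"] Suc by (simp add: x_def)
    thus ?case using nxp[of "x (Suc n)" "x (Suc (Suc n))"] by (simp add: x_def)
  qed
  have edgS: "{x n, x (Suc n)} \<in> S" for n using P by blast
  have neq1: "x n \<noteq> x (Suc n)" for n using two edgS[of n] by fastforce
  have rng: "range x \<subseteq> \<Union>S" using edgS by blast
  have "\<forall>e\<in>S. finite e" using two by (metis card.infinite zero_neq_numeral)
  hence finU: "finite (\<Union>S)" using fin by blast
  have "\<not> inj x"
  proof
    assume "inj x"
    have "finite (range x)" using rng finU finite_subset by blast
    hence "finite (UNIV::nat set)" using finite_imageD \<open>inj x\<close> by blast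
    thus False by simp
  qed
  then obtain i j where ij: "i \<noteq> j" "x i = x j" unfolding inj_def by blast
  hence "\<exists>j. \<exists>i<j. x i = x j" by (metis linorder_neqE_nat)
  define j0 where "j0 = (LEAST j. \<exists>i<j. x i = x j)"
  have "\<exists>i<j0. x i = x j0" unfolding j0_def by (rule LeastI_ex) fact
  then obtain i0 where i0: "i0 < j0" "x i0 = x j0" by blast
  have injx: "inj_on x {..<j0}"
  proof (rule inj_onI, rule ccontr)
    fix p q assume pq: "p \<in> {..<j0}" "q \<in> {..<j0}" "x p = x q" "p \<noteq> q"
    have "\<exists>i<max p q. x i = x (max p q)"
    proof (cases "p < q")
      case True thus ?thesis using pq by (auto simp: max_def)
    next
      case False hence "q < p" using pq by auto
      thus ?thesis using pq by (auto simp: max_def intro!: exI[of _ q])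
    qed
    hence "j0 \<le> max p q" unfolding j0_def by (rule Least_le)
    thus False using pq by auto
  qed
  define l where "l = j0 - i0"
  define v where "v = (\<lambda>t. x (i0 + t))"
  have l3: "3 \<le> l"
  proof (rule ccontr)
    assume "\<not> 3 \<le> l"
    hence "l = 1 \<or> l = 2" using i0 unfolding l_def by auto
    thus False
    proof
      assume "l = 1" hence "j0 = Suc i0" using i0 l_def by auto
      thus False using neq1[of i0] i0 by simp
    next
      assume "l = 2" hence "j0 = Suc (Suc i0)" using i0 l_def by auto
      thus False using P[of i0] i0 by simp
    qed
  qed
  have injv: "inj_on v {..<l}"
  proof (rule inj_onI)
    fix p q assume "p \<in> {..<l}" "q \<in> {..<l}" "v p = v q"
    thus "p = q" using inj_onD[OF injx, of "i0+p" "i0+q"] unfolding v_def l_def by auto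
  qed
  have cyc: "{v t, v (Suc t mod l)} \<in> S" if "t < l" for t
  proof (cases "Suc t < l")
    case True thus ?thesis using edgS[of "i0+t"] by (simp add: v_def)
  next
    case False hence "Suc t = l" using that by auto
    hence "Suc t mod l = 0" by simp
    moreover have "i0 + t = j0 - 1" "Suc (i0 + t) = j0" using \<open>Suc t = l\<close> i0 l_def by auto
    ultimately show ?thesis using edgS[of "i0+t"] i0 by (simp add: v_def insert_commute)
  qed
  have hc: "has_cycle_len S l" unfolding has_cycle_len_def using l3 injv cyc by blast
  have "card ((\<lambda>t. {v t, v (Suc t mod l)}) ` {..<l}) = l"
    using card_image[OF cyc_edge_inj[OF injv l3]] by simp
  moreover have "(\<lambda>t. {v t, v (Suc t mod l)}) ` {..<l} \<subseteq> S" using cyc by auto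
  ultimately have "l \<le> card S" using fin by (metis card_mono)
  thus ?thesis using l3 hc by blast
qed

lemma cycle_mono: "has_cycle_len F l \<Longrightarrow> F \<subseteq> G \<Longrightarrow> has_cycle_len G l"
  unfolding has_cycle_len_def by blast

lemma forest_bound:
  assumes "finite F" "\<forall>e\<in>F. card e = 2" "\<forall>l. \<not> has_cycle_len F l" "F \<noteq> {}"
  shows "card F < card (\<Union>F)"
  using assms
proof (induction "card F" arbitrary: F rule: less_induct)
  case less
  have fin2: "\<forall>e\<in>F. finite e" using less.prems(2) by (metis card.infinite zero_neq_numeral)
  have finU: "finite (\<Union>F)" using less.prems(1) fin2 by blast
  have "\<not> (\<forall>e\<in>F. \<forall>x\<in>e. \<exists>e'\<in>F. x \<in> e' \<and> e' \<noteq> e)"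
  proof
    assume d: "\<forall>e\<in>F. \<forall>x\<in>e. \<exists>e'\<in>F. x \<in> e' \<and> e' \<noteq> e"
    from cycle_exists[OF less.prems(1) less.prems(4) less.prems(2) d] less.prems(3)
    show False by blast
  qed
  then obtain e x where ex: "e \<in> F" "x \<in> e" and lf: "\<forall>e'\<in>F. x \<in> e' \<longrightarrow> e' = e" by blast
  define F' where "F' = F - {e}"
  have cF: "card F = Suc (card F')"
  proof -
    have "card F' = card F - 1" unfolding F'_def using ex less.prems(1) by (simp add: card_Diff_singleton)
    moreover have "card F > 0" using ex less.prems(1) by (auto simp: card_gt_0_iff)
    ultimately show ?thesis by linarith
  qed
  have sub: "\<Union>F' \<subseteq> \<Union>F - {x}" unfolding F'_def using lf by blast
  have xin: "x \<in> \<Union>F" using ex by blast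
  show ?case
  proof (cases "F' = {}")
    case True
    hence "F = {e}" using ex unfolding F'_def by blast
    moreover have "card e = 2" using less.prems(2) ex by blast
    ultimately show ?thesis by simp
  next
    case False
    have "card F' < card (\<Union>F')"
    proof (rule less.hyps)
      show "card F' < card F" using cF by simp
      show "finite F'" using less.prems(1) unfolding F'_def by simp
      show "\<forall>e\<in>F'. card e = 2" using less.prems(2) unfolding F'_def by simp
      show "\<forall>l. \<not> has_cycle_len F' l" using less.prems(3) cycle_mono unfolding F'_def by blast
      show "F' \<noteq> {}" by fact
    qed
    moreover have "card (\<Union>F') \<le> card (\<Union>F - {x})" using sub finU by (intro card_mono) auto
    moreover have "card (\<Union>F - {x}) = card (\<Union>F) - 1" using xin finU by simp
    moreover have "card (\<Union>F) \<ge> 1" using xin finU by (metis card_0_eq empty_iff less_one not_le)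
    ultimately show ?thesis using cF by linarith
  qed
qed

lemma forest_bound':
  assumes "finite F" "\<forall>e\<in>F. card e = 2" "\<forall>l. \<not> has_cycle_len F l"
  shows "card F \<le> card (\<Union>F)"
  using forest_bound[OF assms] by (cases "F = {}") auto

definition tedge :: "nat \<Rightarrow> (nat \<Rightarrow> nat) \<Rightarrow> nat \<Rightarrow> nat set" where
  "tedge L w i = {w i, w (Suc i mod L)}"

definition trail :: "nat set set \<Rightarrow> nat \<Rightarrow> (nat \<Rightarrow> nat) \<Rightarrow> bool" where
  "trail E L w \<longleftrightarrow> 3 \<le> L \<and> (\<forall>i<L. tedge L w i \<in> E) \<and> inj_on (tedge L w) {..<L}"

definition tedges :: "nat \<Rightarrow> (nat \<Rightarrow> nat) \<Rightarrow> nat set set" where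
  "tedges L w = tedge L w ` {..<L}"

definition tverts :: "nat \<Rightarrow> (nat \<Rightarrow> nat) \<Rightarrow> nat set" where
  "tverts L w = w ` {..<L}"

lemma trail_mono: "trail E L w \<Longrightarrow> tedges L w \<subseteq> E' \<Longrightarrow> trail E' L w"
  unfolding trail_def tedges_def by blast

lemma trail_sub: "trail E L w \<Longrightarrow> tedges L w \<subseteq> E"
  unfolding trail_def tedges_def by blast

lemma card_tedges: "trail E L w \<Longrightarrow> card (tedges L w) = L"
  unfolding trail_def tedges_def by (simp add: card_image)

lemma tedge_verts: "trail E L w \<Longrightarrow> e \<in> tedges L w \<Longrightarrow> e \<subseteq> tverts L w"
  unfolding trail_def tedges_def tverts_def tedge_def
  by (auto intro!: imageI)

lemma cycle_trail:
  assumes "has_cycle_len F l" shows "\<exists>v. trail F l v"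
proof -
  obtain v where v: "3 \<le> l" "inj_on v {..<l}" "\<forall>i<l. {v i, v (Suc i mod l)} \<in> F"
    using assms unfolding has_cycle_len_def by blast
  have "trail F l v" unfolding trail_def tedge_def using v cyc_edge_inj[OF v(2) v(1)] by auto
  thus ?thesis by blast
qed

lemma rot_trail:
  assumes tr: "trail E L w" and s: "s < L"
  defines "w' \<equiv> (\<lambda>i. w ((i + s) mod L))"
  shows "trail E L w'" "tedges L w' = tedges L w" "tverts L w' = tverts L w" "w' 0 = w s"
proof -
  have L0: "0 < L" using tr unfolding trail_def by simp
  define r where "r = (\<lambda>i. (i + s) mod L)"
  have ed: "tedge L w' i = tedge L w (r i)" for i
  proof -
    have "(Suc i mod L + s) mod L = Suc ((i + s) mod L) mod L"
      by (simp add: mod_add_left_eq mod_Suc_eq)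
    thus ?thesis unfolding tedge_def w'_def r_def by simp
  qed
  have rim: "r ` {..<L} = {..<L}"
  proof
    show "r ` {..<L} \<subseteq> {..<L}" unfolding r_def using L0 by auto
    show "{..<L} \<subseteq> r ` {..<L}"
    proof
      fix j assume j: "j \<in> {..<L}"
      define i where "i = (j + (L - s)) mod L"
      have "r i = (j + (L - s) + s) mod L" unfolding r_def i_def by (simp add: mod_add_left_eq)
      also have "\<dots> = (j + L) mod L" using s by simp
      also have "\<dots> = j" using j by simp
      finally show "j \<in> r ` {..<L}" using L0 unfolding i_def by (metis imageI lessThan_iff mod_less_divisor)
    qed
  qed
  have rinj: "inj_on r {..<L}" using rim by (intro eq_card_imp_inj_on) auto
  have te: "tedge L w' ` {..<L} = tedge L w ` {..<L}"
  proof -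
    have "tedge L w' ` {..<L} = tedge L w ` (r ` {..<L})" using ed by (simp add: image_image)
    thus ?thesis using rim by simp
  qed
  have inj': "inj_on (tedge L w') {..<L}"
  proof -
    have "inj_on (tedge L w \<circ> r) {..<L}" using tr rinj rim unfolding trail_def
      by (intro comp_inj_on) auto
    moreover have "tedge L w' = tedge L w \<circ> r" using ed by auto
    ultimately show ?thesis by simp
  qed
  have "\<forall>i<L. tedge L w' i \<in> E"
  proof (intro allI impI)
    fix i assume "i < L"
    hence "tedge L w' i \<in> tedge L w ` {..<L}" using te by blast
    thus "tedge L w' i \<in> E" using tr unfolding trail_def by auto
  qed
  thus "trail E L w'" using tr inj' unfolding trail_def by auto
  show "tedges L w' = tedges L w" using te unfolding tedges_def .
  have "w' ` {..<L} = w ` (r ` {..<L})" unfolding w'_def r_def by (simp add: image_image)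
  thus "tverts L w' = tverts L w" using rim unfolding tverts_def by simp
  show "w' 0 = w s" unfolding w'_def using s by simp
qed

lemma splice_trail:
  assumes t1: "trail E L1 w1" and t2: "trail E L2 w2" and x: "w1 0 = w2 0"
    and dj: "tedges L1 w1 \<inter> tedges L2 w2 = {}"
  defines "w \<equiv> (\<lambda>i. if i < L1 then w1 i else w2 (i - L1))"
  shows "trail E (L1 + L2) w" "tedges (L1 + L2) w = tedges L1 w1 \<union> tedges L2 w2"
    "tverts (L1 + L2) w = tverts L1 w1 \<union> tverts L2 w2"
proof -
  define L where "L = L1 + L2"
  have L1: "3 \<le> L1" and L2: "3 \<le> L2" using t1 t2 unfolding trail_def by auto
  have ed: "tedge L w i = (if i < L1 then tedge L1 w1 i else tedge L2 w2 (i - L1))" if i: "i < L" for i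
  proof (cases "i < L1")
    case True
    show ?thesis
    proof (cases "Suc i < L1")
      case True2: True
      thus ?thesis using True L2 unfolding tedge_def w_def L_def by simp
    next
      case False
      hence "Suc i = L1" using True by simp
      thus ?thesis using True L2 x unfolding tedge_def w_def L_def by simp
    qed
  next
    case False
    show ?thesis
    proof (cases "Suc i < L")
      case True
      hence "Suc (i - L1) < L2" "Suc i - L1 = Suc (i - L1)" using False unfolding L_def by auto
      thus ?thesis using True False unfolding tedge_def w_def L_def by simp
    next
      case False2: False
      hence "Suc i = L" using i by simp
      hence "Suc (i - L1) = L2" using False unfolding L_def by simp
      thus ?thesis using False \<open>Suc i = L\<close> x L1 unfolding tedge_def w_def L_def by simp
    qed
  qed
  have split: "{..<L} = {..<L1} \<union> {L1..<L}" unfolding L_def by auto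
  have sh: "(\<lambda>i. i - L1) ` {L1..<L} = {..<L2}"
  proof
    show "(\<lambda>i. i - L1) ` {L1..<L} \<subseteq> {..<L2}" unfolding L_def by auto
    show "{..<L2} \<subseteq> (\<lambda>i. i - L1) ` {L1..<L}"
    proof
      fix j assume "j \<in> {..<L2}"
      hence "j + L1 \<in> {L1..<L}" "j = (j + L1) - L1" unfolding L_def by auto
      thus "j \<in> (\<lambda>i. i - L1) ` {L1..<L}" by blast
    qed
  qed
  have im: "tedge L w ` {..<L} = tedge L1 w1 ` {..<L1} \<union> tedge L2 w2 ` {..<L2}"
  proof -
    have "\<forall>i\<in>{..<L1}. tedge L w i = tedge L1 w1 i" using ed unfolding L_def by auto
    hence a: "tedge L w ` {..<L1} = tedge L1 w1 ` {..<L1}" by (intro image_cong) auto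
    have "\<forall>i\<in>{L1..<L}. tedge L w i = (tedge L2 w2 \<circ> (\<lambda>i. i - L1)) i" using ed by auto
    hence "tedge L w ` {L1..<L} = (tedge L2 w2 \<circ> (\<lambda>i. i - L1)) ` {L1..<L}"
      by (intro image_cong) auto
    also have "\<dots> = tedge L2 w2 ` {..<L2}" by (subst image_comp[symmetric], subst sh, rule refl)
    finally show ?thesis using a split by (simp add: image_Un)
  qed
  have vim: "w ` {..<L} = w1 ` {..<L1} \<union> w2 ` {..<L2}"
  proof -
    have a: "w ` {..<L1} = w1 ` {..<L1}" by (rule image_cong) (auto simp: w_def)
    have "w ` {L1..<L} = (w2 \<circ> (\<lambda>i. i - L1)) ` {L1..<L}"
      by (rule image_cong) (auto simp: w_def)
    also have "\<dots> = w2 ` {..<L2}" by (subst image_comp[symmetric], subst sh, rule refl)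
    finally show ?thesis using a split by (simp add: image_Un)
  qed
  have cd: "card (tedge L w ` {..<L}) = L"
  proof -
    have "card (tedges L1 w1 \<union> tedges L2 w2) = L1 + L2"
      using card_tedges[OF t1] card_tedges[OF t2] dj
      by (simp add: card_Un_disjoint tedges_def)
    thus ?thesis using im unfolding tedges_def L_def by simp
  qed
  have inj: "inj_on (tedge L w) {..<L}" using cd by (intro eq_card_imp_inj_on) auto
  have inE: "\<forall>i<L. tedge L w i \<in> E"
  proof (intro allI impI)
    fix i assume "i < L"
    hence "tedge L w i \<in> tedge L1 w1 ` {..<L1} \<union> tedge L2 w2 ` {..<L2}" using im by blast
    thus "tedge L w i \<in> E" using t1 t2 unfolding trail_def by auto
  qed
  show "trail E (L1 + L2) w" using inj inE L1 unfolding trail_def L_def by auto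
  show "tedges (L1 + L2) w = tedges L1 w1 \<union> tedges L2 w2" using im unfolding tedges_def L_def .
  show "tverts (L1 + L2) w = tverts L1 w1 \<union> tverts L2 w2" using vim unfolding tverts_def L_def .
qed

type_synonym tr = "nat \<times> (nat \<Rightarrow> nat)"

definition tv :: "tr \<Rightarrow> nat set" where "tv t = tverts (fst t) (snd t)"
definition te :: "tr \<Rightarrow> nat set set" where "te t = tedges (fst t) (snd t)"
definition istr :: "nat set set \<Rightarrow> tr \<Rightarrow> bool" where "istr E t = trail E (fst t) (snd t)"

definition splice2 :: "tr \<Rightarrow> tr \<Rightarrow> tr" where
  "splice2 t1 t2 = (let x = SOME x. x \<in> tv t1 \<inter> tv t2;
      s1 = SOME s. s < fst t1 \<and> snd t1 s = x; s2 = SOME s. s < fst t2 \<and> snd t2 s = x;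
      w1 = (\<lambda>i. snd t1 ((i + s1) mod fst t1)); w2 = (\<lambda>i. snd t2 ((i + s2) mod fst t2))
    in (fst t1 + fst t2, \<lambda>i. if i < fst t1 then w1 i else w2 (i - fst t1)))"

lemma splice2p:
  assumes "istr E (L1, w1)" "istr E (L2, w2)" "tv (L1, w1) \<inter> tv (L2, w2) \<noteq> {}"
    "te (L1, w1) \<inter> te (L2, w2) = {}"
  shows "istr E (splice2 (L1, w1) (L2, w2)) \<and> te (splice2 (L1, w1) (L2, w2)) = te (L1, w1) \<union> te (L2, w2)
    \<and> tv (splice2 (L1, w1) (L2, w2)) = tv (L1, w1) \<union> tv (L2, w2)
    \<and> fst (splice2 (L1, w1) (L2, w2)) = L1 + L2"
proof -
  define x where "x = (SOME x. x \<in> tv (L1, w1) \<inter> tv (L2, w2))"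
  have x: "x \<in> tv (L1, w1) \<inter> tv (L2, w2)" unfolding x_def using assms(3) by (metis ex_in_conv someI_ex)
  define s1 where "s1 = (SOME s. s < L1 \<and> w1 s = x)"
  define s2 where "s2 = (SOME s. s < L2 \<and> w2 s = x)"
  have s1: "s1 < L1 \<and> w1 s1 = x" unfolding s1_def
    by (rule someI_ex) (use x in \<open>auto simp: tv_def tverts_def\<close>)
  have s2: "s2 < L2 \<and> w2 s2 = x" unfolding s2_def
    by (rule someI_ex) (use x in \<open>auto simp: tv_def tverts_def\<close>)
  define v1 where "v1 = (\<lambda>i. w1 ((i + s1) mod L1))"
  define v2 where "v2 = (\<lambda>i. w2 ((i + s2) mod L2))"
  have eq: "splice2 (L1, w1) (L2, w2) = (L1 + L2, \<lambda>i. if i < L1 then v1 i else v2 (i - L1))"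
    unfolding splice2_def Let_def fst_conv snd_conv x_def[symmetric] s1_def[symmetric] s2_def[symmetric]
    v1_def v2_def ..
  have tr1: "trail E L1 w1" and tr2: "trail E L2 w2" using assms(1,2) by (auto simp: istr_def)
  note r1 = rot_trail[OF tr1, of s1, folded v1_def, OF conjunct1[OF s1]]
  note r2 = rot_trail[OF tr2, of s2, folded v2_def, OF conjunct1[OF s2]]
  have dj: "tedges L1 v1 \<inter> tedges L2 v2 = {}" using assms(4) r1(2) r2(2) s1 s2 by (auto simp: te_def)
  have x0: "v1 0 = v2 0" using s1 s2 by (simp add: v1_def v2_def)
  note sp = splice_trail[OF r1(1) r2(1) x0 dj]
  show ?thesis using sp eq r1(2,3) r2(2,3) s1 s2 by (simp add: istr_def te_def tv_def)
qed

lemma splice2: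
  assumes "istr E t1" "istr E t2" "tv t1 \<inter> tv t2 \<noteq> {}" "te t1 \<inter> te t2 = {}"
  shows "istr E (splice2 t1 t2)" "te (splice2 t1 t2) = te t1 \<union> te t2"
    "tv (splice2 t1 t2) = tv t1 \<union> tv t2" "fst (splice2 t1 t2) = fst t1 + fst t2"
proof -
  obtain L1 w1 where t1: "t1 = (L1, w1)" by force
  obtain L2 w2 where t2: "t2 = (L2, w2)" by force
  note h = splice2p[of E L1 w1 L2 w2, folded t1 t2]
  show "istr E (splice2 t1 t2)" "te (splice2 t1 t2) = te t1 \<union> te t2"
    "tv (splice2 t1 t2) = tv t1 \<union> tv t2" "fst (splice2 t1 t2) = fst t1 + fst t2"
    using h assms t1 t2 by auto
qed

fun ins :: "tr \<Rightarrow> tr list \<Rightarrow> tr list" where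
  "ins W [] = [W]"
| "ins W (t # ts) = (if tv W \<inter> tv t \<noteq> {} then ins (splice2 W t) ts else t # ins W ts)"

fun pd :: "tr list \<Rightarrow> bool" where
  "pd [] = True"
| "pd (t # ts) = ((\<forall>u\<in>set ts. tv t \<inter> tv u = {}) \<and> pd ts)"

lemma te_tv: "istr E t \<Longrightarrow> istr E u \<Longrightarrow> tv t \<inter> tv u = {} \<Longrightarrow> te t \<inter> te u = {}"
proof -
  assume a: "istr E t" "istr E u" "tv t \<inter> tv u = {}"
  show "te t \<inter> te u = {}"
  proof (rule ccontr)
    assume "te t \<inter> te u \<noteq> {}"
    then obtain e where e: "e \<in> te t" "e \<in> te u" by blast
    have "e \<subseteq> tv t" "e \<subseteq> tv u" using tedge_verts a e unfolding istr_def te_def tv_def by blast+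
    moreover have "e \<noteq> {}" using e(1) unfolding te_def tedges_def tedge_def by auto
    ultimately show False using a(3) by blast
  qed
qed

lemma ins_props:
  assumes "istr E W" "\<forall>t\<in>set ts. istr E t" "pd ts" "\<forall>t\<in>set ts. te W \<inter> te t = {}"
  shows "(\<forall>t\<in>set (ins W ts). istr E t) \<and> pd (ins W ts)
    \<and> sum_list (map fst (ins W ts)) = fst W + sum_list (map fst ts)
    \<and> \<Union>(tv ` set (ins W ts)) = tv W \<union> \<Union>(tv ` set ts)"
  using assms
proof (induction ts arbitrary: W)
  case Nil thus ?case by simp
next
  case (Cons t ts)
  show ?case
  proof (cases "tv W \<inter> tv t \<noteq> {}")
    case True
    have te0: "te W \<inter> te t = {}" using Cons.prems by simp
    note sp = splice2[OF Cons.prems(1) _ True te0]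
    have tt: "istr E t" using Cons.prems by simp
    have "\<forall>u\<in>set ts. te (splice2 W t) \<inter> te u = {}"
    proof
      fix u assume u: "u \<in> set ts"
      have "te t \<inter> te u = {}" using te_tv[OF tt, of u] Cons.prems u by auto
      thus "te (splice2 W t) \<inter> te u = {}" using sp(2)[OF tt] Cons.prems(4) u by auto
    qed
    hence IH: "(\<forall>t\<in>set (ins (splice2 W t) ts). istr E t) \<and> pd (ins (splice2 W t) ts)
      \<and> sum_list (map fst (ins (splice2 W t) ts)) = fst (splice2 W t) + sum_list (map fst ts)
      \<and> \<Union>(tv ` set (ins (splice2 W t) ts)) = tv (splice2 W t) \<union> \<Union>(tv ` set ts)"
      using Cons.IH[OF sp(1)[OF tt]] Cons.prems by simp
    show ?thesis using IH True sp(3,4)[OF tt] by auto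
  next
    case False
    have IH: "(\<forall>t\<in>set (ins W ts). istr E t) \<and> pd (ins W ts)
      \<and> sum_list (map fst (ins W ts)) = fst W + sum_list (map fst ts)
      \<and> \<Union>(tv ` set (ins W ts)) = tv W \<union> \<Union>(tv ` set ts)"
      using Cons.IH[OF Cons.prems(1)] Cons.prems by simp
    have "\<forall>u\<in>set (ins W ts). tv t \<inter> tv u = {}"
    proof
      fix u assume "u \<in> set (ins W ts)"
      hence "tv u \<subseteq> tv W \<union> \<Union>(tv ` set ts)" using IH by blast
      thus "tv t \<inter> tv u = {}" using False Cons.prems(3) by auto
    qed
    thus ?thesis using IH False Cons.prems by auto
  qed
qed

lemma pd_card: "pd ts \<Longrightarrow> (\<forall>t\<in>set ts. finite (tv t)) \<Longrightarrow>
  sum_list (map (\<lambda>t. card (tv t)) ts) = card (\<Union>(tv ` set ts))"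
proof (induction ts)
  case Nil thus ?case by simp
next
  case (Cons t ts)
  have "tv t \<inter> \<Union>(tv ` set ts) = {}" using Cons.prems by auto
  moreover have "finite (\<Union>(tv ` set ts))" using Cons.prems by auto
  ultimately show ?case using Cons by (simp add: card_Un_disjoint)
qed

lemma tv_sub: "istr F t \<Longrightarrow> tv t \<subseteq> \<Union>F"
proof
  fix y assume a: "istr F t" "y \<in> tv t"
  then obtain i where i: "i < fst t" "y = snd t i" unfolding tv_def tverts_def by auto
  have "tedge (fst t) (snd t) i \<in> F" using a(1) i unfolding istr_def trail_def by auto
  thus "y \<in> \<Union>F" using i unfolding tedge_def by auto
qed

lemma pack:
  assumes "finite F" "\<forall>e\<in>F. card e = 2"
  shows "\<exists>ts. (\<forall>t\<in>set ts. istr F t) \<and> pd ts \<and> card F \<le> sum_list (map fst ts) + card (\<Union>F)"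
  using assms
proof (induction "card F" arbitrary: F rule: less_induct)
  case less
  show ?case
  proof (cases "\<exists>l. has_cycle_len F l")
    case False
    hence "card F \<le> card (\<Union>F)" using forest_bound'[OF less.prems] by blast
    thus ?thesis by (intro exI[of _ "[]"]) simp
  next
    case True
    then obtain l where "has_cycle_len F l" by blast
    then obtain v where v: "trail F l v" using cycle_trail by blast
    define F' where "F' = F - tedges l v"
    have sub: "tedges l v \<subseteq> F" using trail_sub[OF v] .
    have fin': "finite F'" using less.prems unfolding F'_def by simp
    have cF: "card F = card F' + l"
    proof -
      have "card F' = card F - card (tedges l v)" unfolding F'_def using sub less.prems(1)
        by (simp add: card_Diff_subset finite_subset)
      moreover have "card (tedges l v) \<le> card F" using sub less.prems(1) by (simp add: card_mono)
      ultimately show ?thesis using card_tedges[OF v] by linarith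
    qed
    have l3: "3 \<le> l" using v unfolding trail_def by simp
    obtain ts where ts: "\<forall>t\<in>set ts. istr F' t" "pd ts" "card F' \<le> sum_list (map fst ts) + card (\<Union>F')"
      using less.hyps[of F'] cF l3 fin' less.prems(2) unfolding F'_def by auto
    have trF: "\<forall>t\<in>set ts. istr F t" using ts(1) unfolding istr_def F'_def using trail_mono trail_sub by blast
    have W: "istr F (l, v)" using v by (simp add: istr_def)
    have djW: "\<forall>t\<in>set ts. te (l, v) \<inter> te t = {}"
    proof
      fix t assume "t \<in> set ts"
      hence "te t \<subseteq> F'" using ts(1) trail_sub unfolding istr_def te_def by blast
      thus "te (l, v) \<inter> te t = {}" unfolding F'_def te_def by auto
    qed
    note ip = ins_props[OF W trF ts(2) djW]
    have "card (\<Union>F') \<le> card (\<Union>F)"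
    proof (rule card_mono)
      have "\<forall>e\<in>F. finite e" using less.prems(2) by (metis card.infinite zero_neq_numeral)
      thus "finite (\<Union>F)" using less.prems(1) by blast
      show "\<Union>F' \<subseteq> \<Union>F" unfolding F'_def by blast
    qed
    hence "card F \<le> sum_list (map fst (ins (l, v) ts)) + card (\<Union>F)" using ip ts(3) cF by simp
    thus ?thesis using ip by blast
  qed
qed

lemma best_trail:
  assumes fin: "finite E" and two: "\<forall>e\<in>E. card e = 2" and VN: "\<Union>E \<subseteq> {..<N}"
    and mN: "N < card E"
  shows "\<exists>L w. trail E L w \<and> (card E - N) * card (tverts L w) \<le> L * N"
proof -
  obtain ts where ts: "\<forall>t\<in>set ts. istr E t" "pd ts" "card E \<le> sum_list (map fst ts) + card (\<Union>E)"
    using pack[OF fin two] by blast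
  have cU: "card (\<Union>E) \<le> N" using VN by (metis card_lessThan card_mono finite_lessThan)
  define M where "M = card E - N"
  have M: "M \<le> sum_list (map fst ts)" "0 < M" using ts(3) cU mN unfolding M_def by auto
  have ftv: "\<forall>t\<in>set ts. finite (tv t)" unfolding tv_def tverts_def by simp
  have ctv: "sum_list (map (\<lambda>t. card (tv t)) ts) \<le> N"
  proof -
    have "\<Union>(tv ` set ts) \<subseteq> \<Union>E" using ts(1) tv_sub by blast
    moreover have "finite (\<Union>E)"
    proof -
      have "\<forall>e\<in>E. finite e" using two by (metis card.infinite zero_neq_numeral)
      thus ?thesis using fin by blast
    qed
    ultimately have "card (\<Union>(tv ` set ts)) \<le> card (\<Union>E)" by (intro card_mono)
    thus ?thesis using pd_card[OF ts(2) ftv] cU by simp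
  qed
  show ?thesis
  proof (rule ccontr)
    assume "\<not> ?thesis"
    hence lt: "\<forall>t\<in>set ts. fst t * N < M * card (tv t)"
      using ts(1) unfolding M_def istr_def tv_def by (metis not_le prod.collapse)
    have ne: "ts \<noteq> []" using M by auto
    have "sum_list (map (\<lambda>t. fst t * N) ts) < sum_list (map (\<lambda>t. M * card (tv t)) ts)"
      using lt ne by (intro sum_list_strict_mono) auto
    also have "\<dots> = M * sum_list (map (\<lambda>t. card (tv t)) ts)" by (simp add: sum_list_const_mult)
    also have "\<dots> \<le> M * N" using ctv by simp
    also have "\<dots> \<le> sum_list (map fst ts) * N" using M by simp
    also have "\<dots> = sum_list (map (\<lambda>t. fst t * N) ts)" by (simp add: sum_list_mult_const)
    finally show False by simp
  qed
qed

definition walk :: "nat set set \<Rightarrow> nat \<Rightarrow> nat \<Rightarrow> nat \<Rightarrow> bool" where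
  "walk E x y j \<longleftrightarrow> (\<exists>w. w 0 = x \<and> w j = y \<and> (\<forall>i<j. {w i, w (Suc i)} \<in> E))"

definition gd :: "nat set set \<Rightarrow> nat \<Rightarrow> nat \<Rightarrow> nat \<Rightarrow> nat" where
  "gd E K x y = (LEAST j. j = K \<or> walk E x y j)"

lemma gd_le: "gd E K x y \<le> K"
  unfolding gd_def by (rule Least_le) simp

lemma gd_le_walk: "walk E x y j \<Longrightarrow> gd E K x y \<le> j"
  unfolding gd_def by (rule Least_le) simp

lemma gd_walk: "gd E K x y < K \<Longrightarrow> walk E x y (gd E K x y)"
proof -
  assume a: "gd E K x y < K"
  have "gd E K x y = K \<or> walk E x y (gd E K x y)" unfolding gd_def by (rule LeastI_ex) auto
  thus ?thesis using a by simp
qed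

lemma walk0: "walk E x x 0" unfolding walk_def by (intro exI[of _ "\<lambda>_. x"]) simp

lemma gd_refl: "gd E K x x = 0" using gd_le_walk[OF walk0] by (metis le_zero_eq)

lemma walk_sym: "walk E x y j \<Longrightarrow> walk E y x j"
proof -
  assume "walk E x y j"
  then obtain w where w: "w 0 = x" "w j = y" "\<forall>i<j. {w i, w (Suc i)} \<in> E" unfolding walk_def by blast
  define w' where "w' = (\<lambda>i. w (j - i))"
  have "\<forall>i<j. {w' i, w' (Suc i)} \<in> E"
  proof (intro allI impI)
    fix i assume i: "i < j"
    have "{w (j - Suc i), w (Suc (j - Suc i))} \<in> E" using w(3) i by simp
    moreover have "Suc (j - Suc i) = j - i" using i by simp
    ultimately show "{w' i, w' (Suc i)} \<in> E" unfolding w'_def by (simp add: insert_commute)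
  qed
  moreover have "w' 0 = y" "w' j = x" using w unfolding w'_def by auto
  ultimately show ?thesis unfolding walk_def by blast
qed

lemma gd_sym: "gd E K x y = gd E K y x"
proof -
  have "gd E K x y \<le> gd E K y x" for x y
  proof (cases "gd E K y x < K")
    case True thus ?thesis using gd_walk[OF True] walk_sym gd_le_walk by blast
  next
    case False thus ?thesis using gd_le[of E K x y] by simp
  qed
  thus ?thesis by (metis le_antisym)
qed

lemma walk_trans: "walk E x y a \<Longrightarrow> walk E y z b \<Longrightarrow> walk E x z (a + b)"
proof -
  assume "walk E x y a" "walk E y z b"
  then obtain w1 w2 where w1: "w1 0 = x" "w1 a = y" "\<forall>i<a. {w1 i, w1 (Suc i)} \<in> E"
    and w2: "w2 0 = y" "w2 b = z" "\<forall>i<b. {w2 i, w2 (Suc i)} \<in> E" unfolding walk_def by blast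
  define w where "w = (\<lambda>i. if i \<le> a then w1 i else w2 (i - a))"
  have "\<forall>i<a+b. {w i, w (Suc i)} \<in> E"
  proof (intro allI impI)
    fix i assume i: "i < a + b"
    show "{w i, w (Suc i)} \<in> E"
    proof (cases "i < a")
      case True thus ?thesis using w1(3) unfolding w_def by simp
    next
      case False
      hence "{w2 (i - a), w2 (Suc (i - a))} \<in> E" using w2(3) i by simp
      moreover have "Suc i - a = Suc (i - a)" using False by simp
      ultimately show ?thesis using False w1(2) w2(1) unfolding w_def
        by (cases "i = a") auto
    qed
  qed
  moreover have "w 0 = x" "w (a + b) = z" using w1 w2 unfolding w_def by auto
  ultimately show ?thesis unfolding walk_def by blast
qed

lemma gd_tri: "gd E K x z \<le> gd E K x y + gd E K y z"
proof (cases "gd E K x y < K \<and> gd E K y z < K")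
  case True
  hence "walk E x z (gd E K x y + gd E K y z)" using gd_walk walk_trans by blast
  thus ?thesis by (rule gd_le_walk)
next
  case False thus ?thesis using gd_le[of E K x z] by auto
qed

lemma gd_pos: "x \<noteq> y \<Longrightarrow> 0 < K \<Longrightarrow> 0 < gd E K x y"
proof (rule ccontr)
  assume a: "x \<noteq> y" "0 < K" "\<not> 0 < gd E K x y"
  hence "gd E K x y < K" by simp
  hence "walk E x y 0" using gd_walk a by fastforce
  thus False using a unfolding walk_def by auto
qed

lemma gd_edge: "{x, y} \<in> E \<Longrightarrow> gd E K x y \<le> 1"
proof -
  assume a: "{x, y} \<in> E"
  have "walk E x y 1" unfolding walk_def using a by (intro exI[of _ "\<lambda>i. if i = 0 then x else y"]) auto
  thus ?thesis by (rule gd_le_walk)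
qed

definition cst :: "nat set set \<Rightarrow> nat \<Rightarrow> (nat \<Rightarrow> nat) \<Rightarrow> nat set \<Rightarrow> real" where
  "cst E K f e = real (gd E K (f (Min e)) (f (Max e)))"

lemma cst_pair: "cst E K f {u, v} = real (gd E K (f u) (f v))"
proof (cases "u \<le> v")
  case True thus ?thesis unfolding cst_def by (simp add: min_def max_def)
next
  case False thus ?thesis unfolding cst_def by (simp add: min_def max_def gd_sym)
qed

lemma metric_cst: "metric_inst n (cst E K f)"
  unfolding metric_inst_def
proof (intro conjI allI impI ballI)
  fix e show "0 \<le> cst E K f e" unfolding cst_def by simp
next
  fix u v w
  show "cst E K f {u, w} \<le> cst E K f {u, v} + cst E K f {v, w}"
    unfolding cst_pair using gd_tri[of E K "f u" "f w" "f v"] by simp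
qed

lemma is_tour_alt: "is_tour n T \<longleftrightarrow> 3 \<le> n \<and> (\<exists>p. bij_betw p {..<n} {..<n} \<and> T = tedge n p ` {..<n})"
  unfolding is_tour_def tedge_def by simp

lemma tour_inj: "bij_betw p {..<n} {..<n} \<Longrightarrow> 3 \<le> n \<Longrightarrow> inj_on (tedge n p) {..<n}"
  unfolding tedge_def using cyc_edge_inj bij_betw_imp_inj_on by blast

lemma tour_card: "is_tour n T \<Longrightarrow> card T = n"
  unfolding is_tour_alt using tour_inj card_image by fastforce

lemma tour_edge: "is_tour n T \<Longrightarrow> e \<in> T \<Longrightarrow> e \<subseteq> {..<n} \<and> card e = 2"
proof -
  assume a: "is_tour n T" "e \<in> T"
  then obtain p i where p: "bij_betw p {..<n} {..<n}" "3 \<le> n" "i < n" "e = {p i, p (Suc i mod n)}"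
    unfolding is_tour_alt tedge_def by blast
  have s: "Suc i mod n < n" using p by simp
  have "p i \<noteq> p (Suc i mod n)"
  proof
    assume "p i = p (Suc i mod n)"
    hence "i = Suc i mod n" using bij_betw_imp_inj_on[OF p(1)] p(3) s by (meson inj_on_eq_iff lessThan_iff)
    show False
    proof (cases "Suc i < n")
      case True thus False using \<open>i = Suc i mod n\<close> by simp
    next
      case False hence "Suc i = n" using p(3) by simp
      hence "Suc i mod n = 0" by simp
      thus False using \<open>i = Suc i mod n\<close> \<open>Suc i = n\<close> p(2) by simp
    qed
  qed
  moreover have "p i < n" "p (Suc i mod n) < n" using p(1,3) s bij_betwE by blast+
  ultimately show ?thesis using p(4) by auto
qed

lemma tour_fin: "finite {T. is_tour n T}"
proof (rule finite_subset)
  show "{T. is_tour n T} \<subseteq> Pow (Pow {..<n})" using tour_edge by blast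
qed simp

lemma tour_finT: "is_tour n T \<Longrightarrow> finite T"
  unfolding is_tour_alt by auto

lemma tour_deg:
  assumes "is_tour n T" "v < n"
  shows "card {e\<in>T. v \<in> e} = 2"
proof -
  obtain p where p: "bij_betw p {..<n} {..<n}" "3 \<le> n" "T = tedge n p ` {..<n}"
    using assms(1) unfolding is_tour_alt by blast
  obtain j where j: "j < n" "p j = v" using p(1) assms(2) by (metis bij_betw_iff_bijections lessThan_iff)
  have inj: "inj_on p {..<n}" using p(1) bij_betw_imp_inj_on by blast
  define q where "q = (if j = 0 then n - 1 else j - 1)"
  have I: "{i\<in>{..<n}. v \<in> tedge n p i} = {j, q}"
  proof (intro set_eqI iffI)
    fix i assume "i \<in> {i\<in>{..<n}. v \<in> tedge n p i}"
    hence i: "i < n" "p j = p i \<or> p j = p (Suc i mod n)" using j unfolding tedge_def by auto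
    have s: "Suc i mod n < n" using i by simp
    have "i = j \<or> Suc i mod n = j"
      using i(2)
    proof
      assume "p j = p i" thus ?thesis using inj_onD[OF inj, of j i] i(1) j(1) by simp
    next
      assume "p j = p (Suc i mod n)" thus ?thesis using inj_onD[OF inj, of j "Suc i mod n"] s j(1) by simp
    qed
    thus "i \<in> {j, q}"
    proof
      assume "Suc i mod n = j"
      show ?thesis
      proof (cases "Suc i < n")
        case True thus ?thesis using \<open>Suc i mod n = j\<close> unfolding q_def by auto
      next
        case False hence "Suc i = n" using i by simp
        hence "j = 0" using \<open>Suc i mod n = j\<close> by simp
        thus ?thesis using \<open>Suc i = n\<close> unfolding q_def by auto
      qed
    qed simp
  next
    fix i assume "i \<in> {j, q}"
    hence "i = j \<or> i = q" by simp
    thus "i \<in> {i\<in>{..<n}. v \<in> tedge n p i}"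
    proof
      assume "i = j" thus ?thesis using j unfolding tedge_def by auto
    next
      assume iq: "i = q"
      have "i < n \<and> Suc i mod n = j"
      proof (cases "j = 0")
        case True thus ?thesis using iq p(2) unfolding q_def by simp
      next
        case False thus ?thesis using iq j unfolding q_def by simp
      qed
      thus ?thesis using j unfolding tedge_def by auto
    qed
  qed
  have jq: "j \<noteq> q" unfolding q_def using p(2) by auto
  have "{e\<in>T. v \<in> e} = tedge n p ` {i\<in>{..<n}. v \<in> tedge n p i}" using p(3) by auto
  also have "card \<dots> = card {i\<in>{..<n}. v \<in> tedge n p i}"
    using tour_inj[OF p(1,2)] by (intro card_image) (auto intro: inj_on_subset)
  also have "\<dots> = 2" using I jq by simp
  finally show ?thesis .
qed

lemma tour_len_sum:
  assumes "bij_betw p {..<n} {..<n}" "3 \<le> n"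
  shows "tour_len c (tedge n p ` {..<n}) = (\<Sum>i<n. c (tedge n p i))"
  unfolding tour_len_def using tour_inj[OF assms] by (simp add: sum.reindex)

lemma OPT_le: "is_tour n T \<Longrightarrow> OPT n c \<le> tour_len c T"
  unfolding OPT_def using tour_fin by (intro Min_le) auto

lemma OPT_in: "3 \<le> n \<Longrightarrow> \<exists>T. is_tour n T \<and> OPT n c = tour_len c T"
proof -
  assume n: "3 \<le> n"
  have "is_tour n (tedge n id ` {..<n})" unfolding is_tour_alt using n by auto
  hence ne: "tour_len c ` {T. is_tour n T} \<noteq> {}" by blast
  have "OPT n c \<in> tour_len c ` {T. is_tour n T}" unfolding OPT_def
    using tour_fin ne by (intro Min_in) auto
  thus ?thesis by auto
qed

lemma even_sum_odd_card:
  fixes g :: "'a \<Rightarrow> nat"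
  assumes "finite X"
  shows "even (\<Sum>h\<in>X. g h) \<longleftrightarrow> even (card {h\<in>X. odd (g h)})"
  using assms
proof (induction X rule: finite_induct)
  case empty thus ?case by simp
next
  case (insert x F)
  have "{h\<in>insert x F. odd (g h)} = (if odd (g x) then insert x {h\<in>F. odd (g h)} else {h\<in>F. odd (g h)})"
    by auto
  moreover have "x \<notin> {h\<in>F. odd (g h)}" using insert by simp
  moreover have "finite {h\<in>F. odd (g h)}" using insert by simp
  ultimately show ?case using insert by auto
qed

lemma walk_parity:
  fixes W :: "nat \<Rightarrow> nat"
  assumes "\<forall>i<j. W i \<noteq> W (Suc i)"
  shows "even ((\<Sum>i<j. (of_bool (x \<in> {W i, W (Suc i)})::nat)) + of_bool (W 0 = x) + of_bool (W j = x))"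
  using assms
proof (induction j)
  case 0 thus ?case by simp
next
  case (Suc j)
  have ne: "W j \<noteq> W (Suc j)" using Suc.prems by simp
  have e: "(of_bool (x \<in> {W j, W (Suc j)})::nat) = of_bool (W j = x) + of_bool (W (Suc j) = x)"
    using ne by auto
  have IH: "even ((\<Sum>i<j. (of_bool (x \<in> {W i, W (Suc i)})::nat)) + of_bool (W 0 = x) + of_bool (W j = x))"
    using Suc by simp
  have "(\<Sum>i<Suc j. (of_bool (x \<in> {W i, W (Suc i)})::nat)) + of_bool (W 0 = x) + of_bool (W (Suc j) = x)
    = ((\<Sum>i<j. (of_bool (x \<in> {W i, W (Suc i)})::nat)) + of_bool (W 0 = x) + of_bool (W j = x))
      + 2 * of_bool (W (Suc j) = x)" (is "?l = ?r + 2 * ?z") using e by simp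
  have "even (?r + 2 * ?z)" by (rule dvd_add[OF IH]) simp
  thus ?case using \<open>?l = ?r + 2 * ?z\<close> by (simp only:)
qed

lemma sum_sum_swap_card:
  fixes g :: "'a \<Rightarrow> nat"
  assumes "finite X" "finite U" "\<forall>e\<in>X. e \<subseteq> U"
  shows "(\<Sum>e\<in>X. \<Sum>v\<in>e. g v) = (\<Sum>v\<in>U. g v * card {e\<in>X. v \<in> e})"
proof -
  have "(\<Sum>e\<in>X. \<Sum>v\<in>e. g v) = (\<Sum>e\<in>X. \<Sum>v\<in>U. if v \<in> e then g v else 0)"
  proof (rule sum.cong[OF refl])
    fix e assume "e \<in> X"
    hence "U \<inter> e = e" using assms by auto
    hence "(\<Sum>v\<in>e. g v) = (\<Sum>v\<in>U \<inter> e. g v)" by simp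
    also have "\<dots> = (\<Sum>v\<in>U. if v \<in> e then g v else 0)" using assms(2) by (rule sum.inter_restrict)
    finally show "(\<Sum>v\<in>e. g v) = (\<Sum>v\<in>U. if v \<in> e then g v else 0)" .
  qed
  also have "\<dots> = (\<Sum>v\<in>U. \<Sum>e\<in>X. if v \<in> e then g v else 0)" by (rule sum.swap)
  also have "\<dots> = (\<Sum>v\<in>U. g v * card {e\<in>X. v \<in> e})"
  proof (rule sum.cong[OF refl])
    fix v
    have "(\<Sum>e\<in>X. if v \<in> e then g v else 0) = (\<Sum>e\<in>{e\<in>X. v \<in> e}. g v)"
      using assms(1) by (rule sum.inter_filter[symmetric])
    thus "(\<Sum>e\<in>X. if v \<in> e then g v else 0) = g v * card {e\<in>X. v \<in> e}" by (simp add: mult.commute)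
  qed
  finally show ?thesis .
qed

lemma sum_delta_bool:
  fixes a :: "'a"
  assumes "finite X"
  shows "(\<Sum>h\<in>X. (of_bool (a = h) :: nat)) = of_bool (a \<in> X)"
  using assms by (simp add: of_bool_def sum.delta)

lemma even_plus2: "even ((a::nat) + 2 * b) \<Longrightarrow> even a" by simp

lemma card2_pair: "card e = 2 \<Longrightarrow> \<exists>u v. e = {u, v} \<and> u \<noteq> v"
  by (simp add: card_2_iff)

lemma kopt:
  fixes E :: "nat set set" and f :: "nat \<Rightarrow> nat"
  assumes k: "1 \<le> k" and finE: "finite E" and two: "\<forall>h\<in>E. card h = 2"
    and girth: "girth_ge E (2 * k)" and T: "is_tour n T"
    and hT: "\<forall>e\<in>T. f ` e \<in> E \<or> card (f ` e) = 1"
    and injT: "inj_on (\<lambda>e. f ` e) {e\<in>T. f ` e \<in> E}"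
  shows "k_optimal k n (cst E k f) T"
  unfolding k_optimal_def
proof (intro conjI notI)
  show "is_tour n T" by fact
  assume "\<exists>T'. k_move k n T T' \<and> tour_len (cst E k f) T' < tour_len (cst E k f) T"
  then obtain T' where T': "is_tour n T'" and ck: "card (T - T') \<le> k"
    and lt: "tour_len (cst E k f) T' < tour_len (cst E k f) T" unfolding k_move_def by blast
  define c where "c = cst E k f"
  define ga where "ga = (\<lambda>a. gd E k (f (Min a)) (f (Max a)))"
  have cga: "c a = real (ga a)" for a unfolding c_def ga_def cst_def ..
  define R where "R = T - T'"
  define A where "A = T' - T"
  have finT: "finite T" "finite T'" using tour_finT T T' by auto
  have finR: "finite R" and finA: "finite A" unfolding R_def A_def using finT by auto
  define RH where "RH = {e\<in>R. f ` e \<in> E}"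
  have finRH: "finite RH" using finR unfolding RH_def by simp
  define r where "r = card RH"
  have cT: "c e = (if f ` e \<in> E then 1 else 0)" if e: "e \<in> T" for e
  proof -
    obtain u v where uv: "e = {u, v}" "u \<noteq> v" using tour_edge[OF T e] card2_pair by blast
    have ce: "c e = real (gd E k (f u) (f v))" unfolding c_def uv cst_pair ..
    show ?thesis
    proof (cases "f ` e \<in> E")
      case True
      hence fe: "{f u, f v} \<in> E" using uv by simp
      hence "card {f u, f v} = 2" using two by blast
      hence "f u \<noteq> f v" by (cases "f u = f v") auto
      hence "0 < gd E k (f u) (f v)" using gd_pos k by simp
      moreover have "gd E k (f u) (f v) \<le> 1" using gd_edge[OF fe] .
      ultimately show ?thesis using True ce by simp
    next
      case False
      hence "card (f ` e) = 1" using hT e by blast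
      hence "f u = f v" using uv by (cases "f u = f v") auto
      thus ?thesis using False ce gd_refl by simp
    qed
  qed
  have sumR: "sum c R = real r"
  proof -
    have "sum c R = (\<Sum>e\<in>R. if f ` e \<in> E then 1 else 0)"
      using cT unfolding R_def by (intro sum.cong) auto
    also have "\<dots> = real (card {e\<in>R. f ` e \<in> E})" using finR by (simp add: sum.If_cases Int_def)
    finally show ?thesis unfolding r_def RH_def .
  qed
  have splitT: "sum c T = sum c (T \<inter> T') + sum c R"
  proof -
    have "sum c T = sum c (T - (T \<inter> T')) + sum c (T \<inter> T')" using finT by (intro sum.subset_diff) auto
    moreover have "T - (T \<inter> T') = R" unfolding R_def by auto
    ultimately show ?thesis by simp
  qed
  have splitT': "sum c T' = sum c (T \<inter> T') + sum c A"
  proof -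
    have "sum c T' = sum c (T' - (T \<inter> T')) + sum c (T \<inter> T')" using finT by (intro sum.subset_diff) auto
    moreover have "T' - (T \<inter> T') = A" unfolding A_def by auto
    ultimately show ?thesis by simp
  qed
  have sumA: "sum c A = real (\<Sum>a\<in>A. ga a)" using cga by simp
  have lessA: "(\<Sum>a\<in>A. ga a) < r"
    using lt splitT splitT' sumR sumA unfolding tour_len_def c_def[symmetric] by linarith
  have rk: "r \<le> k"
  proof -
    have "r \<le> card R" unfolding r_def RH_def using finR by (intro card_mono) auto
    thus ?thesis using ck unfolding R_def by simp
  qed
  have gak: "ga a < k" if "a \<in> A" for a
  proof -
    have "ga a \<le> (\<Sum>a\<in>A. ga a)" using that finA by (intro member_le_sum) auto
    thus ?thesis using lessA rk by linarith
  qed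
  define W where "W = (\<lambda>a. SOME w. w 0 = f (Min a) \<and> w (ga a) = f (Max a) \<and> (\<forall>i<ga a. {w i, w (Suc i)} \<in> E))"
  have Wp: "W a 0 = f (Min a) \<and> W a (ga a) = f (Max a) \<and> (\<forall>i<ga a. {W a i, W a (Suc i)} \<in> E)"
    if "a \<in> A" for a
  proof -
    have "walk E (f (Min a)) (f (Max a)) (ga a)" using gd_walk gak[OF that] unfolding ga_def by blast
    thus ?thesis unfolding W_def walk_def by (rule someI_ex)
  qed
  define st where "st = (\<lambda>a i. {W a i, W a (Suc i)})"
  have stE: "st a i \<in> E" if "a \<in> A" "i < ga a" for a i using Wp[OF that(1)] that(2) unfolding st_def by blast
  define cnt where "cnt = (\<lambda>h. (\<Sum>e\<in>RH. (of_bool (f ` e = h)::nat)) + (\<Sum>a\<in>A. \<Sum>i<ga a. (of_bool (st a i = h)::nat)))"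
  define S where "S = {h\<in>E. odd (cnt h)}"
  have tot: "(\<Sum>h\<in>E. cnt h) = r + (\<Sum>a\<in>A. ga a)"
  proof -
    have 1: "(\<Sum>h\<in>E. \<Sum>e\<in>RH. (of_bool (f ` e = h)::nat)) = r"
    proof -
      have "(\<Sum>h\<in>E. \<Sum>e\<in>RH. (of_bool (f ` e = h)::nat)) = (\<Sum>e\<in>RH. \<Sum>h\<in>E. (of_bool (f ` e = h)::nat))"
        by (rule sum.swap)
      also have "\<dots> = (\<Sum>e\<in>RH. 1)"
        by (rule sum.cong[OF refl]) (simp add: sum_delta_bool[OF finE] RH_def)
      finally show ?thesis unfolding r_def by simp
    qed
    have 2: "(\<Sum>h\<in>E. \<Sum>a\<in>A. \<Sum>i<ga a. (of_bool (st a i = h)::nat)) = (\<Sum>a\<in>A. ga a)"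
    proof -
      have "(\<Sum>h\<in>E. \<Sum>a\<in>A. \<Sum>i<ga a. (of_bool (st a i = h)::nat)) = (\<Sum>a\<in>A. \<Sum>h\<in>E. \<Sum>i<ga a. (of_bool (st a i = h)::nat))"
        by (rule sum.swap)
      also have "\<dots> = (\<Sum>a\<in>A. \<Sum>i<ga a. \<Sum>h\<in>E. (of_bool (st a i = h)::nat))"
        by (rule sum.cong[OF refl]) (rule sum.swap)
      also have "\<dots> = (\<Sum>a\<in>A. \<Sum>i<ga a. 1)"
        by (intro sum.cong[OF refl]) (simp add: sum_delta_bool[OF finE] stE)
      finally show ?thesis by simp
    qed
    show ?thesis unfolding cnt_def sum.distrib 1 2 ..
  qed
  have cntRH: "1 \<le> cnt (f ` e)" if "e \<in> RH" for e
  proof -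
    have "(of_bool (f ` e = f ` e)::nat) \<le> (\<Sum>e'\<in>RH. (of_bool (f ` e' = f ` e)::nat))"
      using that finRH by (intro member_le_sum) auto
    thus ?thesis unfolding cnt_def by simp
  qed
  have Sne: "S \<noteq> {}"
  proof
    assume S0: "S = {}"
    have ge2: "2 \<le> cnt h" if hin: "h \<in> (\<lambda>e. f ` e) ` RH" for h
    proof -
      obtain e where e: "e \<in> RH" "h = f ` e" using hin by blast
      have "h \<in> E" using e unfolding RH_def by simp
      hence "even (cnt h)" using S0 unfolding S_def by blast
      moreover have "1 \<le> cnt h" using cntRH e by simp
      ultimately show ?thesis by presburger
    qed
    have cim: "card ((\<lambda>e. f ` e) ` RH) = r" unfolding r_def
      using injT by (intro card_image) (auto intro: inj_on_subset simp: RH_def R_def)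
    have "2 * r = (\<Sum>h\<in>(\<lambda>e. f ` e) ` RH. 2)" using cim by simp
    also have "\<dots> \<le> (\<Sum>h\<in>(\<lambda>e. f ` e) ` RH. cnt h)" using ge2 by (intro sum_mono) auto
    also have "\<dots> \<le> (\<Sum>h\<in>E. cnt h)" using finE by (intro sum_mono2) (auto simp: RH_def)
    finally show False using tot lessA by linarith
  qed
  have Ssmall: "card S < 2 * k"
  proof -
    have "card S = (\<Sum>h\<in>S. 1)" by simp
    also have "\<dots> \<le> (\<Sum>h\<in>S. cnt h)" by (intro sum_mono) (auto simp: S_def elim: oddE)
    also have "\<dots> \<le> (\<Sum>h\<in>E. cnt h)" using finE by (intro sum_mono2) (auto simp: S_def)
    finally show ?thesis using tot lessA rk by linarith
  qed
  have degRA: "card {e\<in>R. v \<in> e} = card {e\<in>A. v \<in> e}" if v: "v < n" for v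
  proof -
    have "{e\<in>T. v \<in> e} = {e\<in>T \<inter> T'. v \<in> e} \<union> {e\<in>R. v \<in> e}" unfolding R_def by auto
    moreover have "{e\<in>T \<inter> T'. v \<in> e} \<inter> {e\<in>R. v \<in> e} = {}" unfolding R_def by auto
    moreover have "finite {e\<in>T \<inter> T'. v \<in> e}" "finite {e\<in>R. v \<in> e}" using finT finR finA by auto
    ultimately have 1: "card {e\<in>T. v \<in> e} = card {e\<in>T \<inter> T'. v \<in> e} + card {e\<in>R. v \<in> e}"
      by (simp add: card_Un_disjoint)
    have "{e\<in>T'. v \<in> e} = {e\<in>T \<inter> T'. v \<in> e} \<union> {e\<in>A. v \<in> e}" unfolding A_def by auto
    moreover have "{e\<in>T \<inter> T'. v \<in> e} \<inter> {e\<in>A. v \<in> e} = {}" unfolding A_def by auto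
    moreover have "finite {e\<in>T \<inter> T'. v \<in> e}" "finite {e\<in>A. v \<in> e}" using finT finR finA by auto
    ultimately have 2: "card {e\<in>T'. v \<in> e} = card {e\<in>T \<inter> T'. v \<in> e} + card {e\<in>A. v \<in> e}"
      by (simp add: card_Un_disjoint)
    show ?thesis using 1 2 tour_deg[OF T v] tour_deg[OF T' v] by simp
  qed
  have evdeg: "even (card {h\<in>S. x \<in> h})" for x
  proof -
    define Ex where "Ex = {h\<in>E. x \<in> h}"
    have finEx: "finite Ex" using finE unfolding Ex_def by simp
    have cS: "{h\<in>S. x \<in> h} = {h\<in>Ex. odd (cnt h)}" unfolding S_def Ex_def by auto
    define gx where "gx = (\<lambda>v. (of_bool (f v = x)::nat))"
    define D where "D = (\<lambda>e. \<Sum>v\<in>e. gx v)"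
    define P1 where "P1 = (\<Sum>e\<in>RH. (of_bool (x \<in> f ` e)::nat))"
    define P2 where "P2 = (\<Sum>a\<in>A. \<Sum>i<ga a. (of_bool (x \<in> st a i)::nat))"
    have sumEx: "(\<Sum>h\<in>Ex. cnt h) = P1 + P2"
    proof -
      have 1: "(\<Sum>h\<in>Ex. \<Sum>e\<in>RH. (of_bool (f ` e = h)::nat)) = P1"
      proof -
        have "(\<Sum>h\<in>Ex. \<Sum>e\<in>RH. (of_bool (f ` e = h)::nat)) = (\<Sum>e\<in>RH. \<Sum>h\<in>Ex. (of_bool (f ` e = h)::nat))"
          by (rule sum.swap)
        also have "\<dots> = P1" unfolding P1_def
          by (rule sum.cong[OF refl]) (simp only: sum_delta_bool[OF finEx], auto simp: Ex_def RH_def)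
        finally show ?thesis .
      qed
      have 2: "(\<Sum>h\<in>Ex. \<Sum>a\<in>A. \<Sum>i<ga a. (of_bool (st a i = h)::nat)) = P2"
      proof -
        have "(\<Sum>h\<in>Ex. \<Sum>a\<in>A. \<Sum>i<ga a. (of_bool (st a i = h)::nat)) = (\<Sum>a\<in>A. \<Sum>h\<in>Ex. \<Sum>i<ga a. (of_bool (st a i = h)::nat))"
          by (rule sum.swap)
        also have "\<dots> = (\<Sum>a\<in>A. \<Sum>i<ga a. \<Sum>h\<in>Ex. (of_bool (st a i = h)::nat))"
          by (rule sum.cong[OF refl]) (rule sum.swap)
        also have "\<dots> = P2" unfolding P2_def
          by (intro sum.cong[OF refl]) (simp only: sum_delta_bool[OF finEx], auto simp: Ex_def stE)
        finally show ?thesis .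
      qed
      show ?thesis unfolding cnt_def sum.distrib 1 2 ..
    qed
    have clA: "even (P1 + (\<Sum>e\<in>R. D e))"
    proof -
      have RHR: "RH \<subseteq> R" unfolding RH_def by auto
      have "(\<Sum>e\<in>R. D e) = (\<Sum>e\<in>R - RH. D e) + (\<Sum>e\<in>RH. D e)"
        using finR RHR by (intro sum.subset_diff)
      moreover have "(\<Sum>e\<in>RH. D e) = P1" unfolding P1_def
      proof (rule sum.cong[OF refl])
        fix e assume e: "e \<in> RH"
        hence eT: "e \<in> T" and fe: "f ` e \<in> E" unfolding RH_def R_def by auto
        obtain u v where uv: "e = {u, v}" "u \<noteq> v" using tour_edge[OF T eT] card2_pair by blast
        have "card {f u, f v} = 2" using fe two uv by simp
        hence "f u \<noteq> f v" by (cases "f u = f v") auto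
        thus "D e = of_bool (x \<in> f ` e)" unfolding D_def gx_def uv using uv(2) by auto
      qed
      moreover have "even (\<Sum>e\<in>R - RH. D e)"
      proof (rule dvd_sum)
        fix e assume e: "e \<in> R - RH"
        hence eT: "e \<in> T" and fe: "f ` e \<notin> E" unfolding RH_def R_def by auto
        obtain u v where uv: "e = {u, v}" "u \<noteq> v" using tour_edge[OF T eT] card2_pair by blast
        have "card (f ` e) = 1" using hT eT fe by blast
        hence "f u = f v" using uv by (cases "f u = f v") auto
        have "D e = gx u + gx v" unfolding D_def uv using uv(2) by simp
        thus "even (D e)" using \<open>f u = f v\<close> unfolding gx_def by simp
      qed
      ultimately have "P1 + (\<Sum>e\<in>R. D e) = (\<Sum>e\<in>R - RH. D e) + 2 * P1" by simp
      thus ?thesis using \<open>even (\<Sum>e\<in>R - RH. D e)\<close> by simp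
    qed
    have clB: "even (P2 + (\<Sum>a\<in>A. D a))"
    proof -
      have "even (\<Sum>a\<in>A. (\<Sum>i<ga a. (of_bool (x \<in> st a i)::nat)) + D a)"
      proof (rule dvd_sum)
        fix a assume a: "a \<in> A"
        hence aT: "a \<in> T'" unfolding A_def by simp
        obtain u v where uv: "a = {u, v}" "u \<noteq> v" using tour_edge[OF T' aT] card2_pair by blast
        have Wa: "W a 0 = f (Min a)" "W a (ga a) = f (Max a)" using Wp[OF a] by auto
        have MM: "Min a = min u v" "Max a = max u v" using uv by auto
        have D2: "D a = gx u + gx v" unfolding D_def uv using uv(2) by simp
        have Da: "D a = of_bool (W a 0 = x) + of_bool (W a (ga a) = x)"
          unfolding D2 Wa MM gx_def by (cases "u \<le> v") (simp_all add: min_def max_def)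
        have ne: "\<forall>i<ga a. W a i \<noteq> W a (Suc i)"
        proof (intro allI impI)
          fix i assume "i < ga a"
          hence "{W a i, W a (Suc i)} \<in> E" using Wp[OF a] by simp
          hence "card {W a i, W a (Suc i)} = 2" using two by blast
          thus "W a i \<noteq> W a (Suc i)" by (cases "W a i = W a (Suc i)") auto
        qed
        show "even ((\<Sum>i<ga a. (of_bool (x \<in> st a i)::nat)) + D a)"
          using walk_parity[OF ne, of x] unfolding Da st_def by (simp add: add.assoc)
      qed
      thus ?thesis unfolding P2_def sum.distrib .
    qed
    have clC: "(\<Sum>e\<in>R. D e) = (\<Sum>a\<in>A. D a)"
    proof -
      have subR: "\<forall>e\<in>R. e \<subseteq> {..<n}" using tour_edge[OF T] unfolding R_def by blast
      have subA: "\<forall>e\<in>A. e \<subseteq> {..<n}" using tour_edge[OF T'] unfolding A_def by blast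
      have "(\<Sum>e\<in>R. D e) = (\<Sum>v\<in>{..<n}. gx v * card {e\<in>R. v \<in> e})"
        unfolding D_def by (rule sum_sum_swap_card[OF finR _ subR]) simp
      also have "\<dots> = (\<Sum>v\<in>{..<n}. gx v * card {e\<in>A. v \<in> e})"
        using degRA by (intro sum.cong) auto
      also have "\<dots> = (\<Sum>e\<in>A. D e)"
        unfolding D_def by (rule sum_sum_swap_card[OF finA _ subA, symmetric]) simp
      finally show ?thesis .
    qed
    have "even (P1 + P2)"
    proof -
      have "even ((P1 + (\<Sum>e\<in>R. D e)) + (P2 + (\<Sum>a\<in>A. D a)))" using clA clB by (rule dvd_add)
      moreover have "(P1 + (\<Sum>e\<in>R. D e)) + (P2 + (\<Sum>a\<in>A. D a)) = (P1 + P2) + 2 * (\<Sum>e\<in>R. D e)"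
        using clC by simp
      ultimately have "even ((P1 + P2) + 2 * (\<Sum>e\<in>R. D e))" by (simp only:)
      thus ?thesis by (rule even_plus2)
    qed
    hence "even (\<Sum>h\<in>Ex. cnt h)" using sumEx by (simp only:)
    hence "even (card {h\<in>Ex. odd (cnt h)})" by (rule iffD1[OF even_sum_odd_card[OF finEx, of cnt]])
    thus ?thesis unfolding cS .
  qed
  have finS: "finite S" using finE unfolding S_def by simp
  have twoS: "\<forall>h\<in>S. card h = 2" using two unfolding S_def by simp
  have degS: "\<forall>h\<in>S. \<forall>x\<in>h. \<exists>h'\<in>S. x \<in> h' \<and> h' \<noteq> h"
  proof (intro ballI)
    fix h x assume h: "h \<in> S" and x: "x \<in> h"
    show "\<exists>h'\<in>S. x \<in> h' \<and> h' \<noteq> h"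
    proof (rule ccontr)
      assume nex: "\<not> (\<exists>h'\<in>S. x \<in> h' \<and> h' \<noteq> h)"
      have "{h'\<in>S. x \<in> h'} = {h}"
      proof
        show "{h'\<in>S. x \<in> h'} \<subseteq> {h}" using nex by blast
        show "{h} \<subseteq> {h'\<in>S. x \<in> h'}" using h x by blast
      qed
      hence c1: "card {h'\<in>S. x \<in> h'} = 1" by simp
      have "even (card {h'\<in>S. x \<in> h'})" by (rule evdeg)
      thus False unfolding c1 by simp
    qed
  qed
  obtain l where l: "3 \<le> l" "l \<le> card S" "has_cycle_len S l"
    using cycle_exists[OF finS Sne twoS degS] by blast
  have "S \<subseteq> E" unfolding S_def by auto
  hence "has_cycle_len E l" by (rule cycle_mono[OF l(3)])
  moreover have "l < 2 * k" using l(2) Ssmall by simp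
  ultimately show False using girth unfolding girth_ge_def by blast
qed

lemma OPT_bound:
  fixes f :: "nat \<Rightarrow> nat"
  assumes n: "3 \<le> n" and V: "f ` {..<n} \<subseteq> V" "finite V"
  shows "OPT n (cst E k f) \<le> real k * real (card V)"
proof -
  define xs where "xs = sort_key f [0..<n]"
  define p where "p = (\<lambda>i. xs ! i)"
  have lx: "length xs = n" unfolding xs_def by simp
  have bij: "bij_betw p {..<n} {..<n}" unfolding p_def
    by (rule bij_betw_nth) (auto simp: xs_def)
  define F where "F = (\<lambda>i. f (p i))"
  have mono: "F i \<le> F j" if "i \<le> j" "j < n" for i j
  proof -
    have "sorted (map f xs)" unfolding xs_def by simp
    hence "map f xs ! i \<le> map f xs ! j" using that lx by (intro sorted_nth_mono) auto
    thus ?thesis using that lx unfolding F_def p_def by simp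
  qed
  define Ch where "Ch = {i\<in>{..<n}. F i \<noteq> F (Suc i mod n)}"
  define g where "g = (\<lambda>i. F (Suc i mod n))"
  have ginj: "inj_on g Ch"
  proof -
    have lt: "g i \<noteq> g j" if ij: "i \<in> Ch" "j \<in> Ch" "i < j" for i j
    proof (cases "Suc j < n")
      case True
      have "g i = F (Suc i)" unfolding g_def using ij True by simp
      also have "\<dots> \<le> F j" using ij True by (intro mono) auto
      also have "\<dots> < F (Suc j)"
      proof -
        have "F j \<le> F (Suc j)" using True by (intro mono) auto
        moreover have "F j \<noteq> F (Suc j)" using ij(2) True unfolding Ch_def by simp
        ultimately show ?thesis by simp
      qed
      also have "\<dots> = g j" unfolding g_def using True by simp
      finally show ?thesis by simp
    next
      case False
      hence "Suc j = n" using ij(2) unfolding Ch_def by simp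
      hence gj: "g j = F 0" unfolding g_def by simp
      have si: "Suc i < n" using ij \<open>Suc j = n\<close> by simp
      have "F 0 \<le> F i" using si by (intro mono) auto
      also have "\<dots> < F (Suc i)"
      proof -
        have "F i \<le> F (Suc i)" using si by (intro mono) auto
        moreover have "F i \<noteq> F (Suc i)" using ij(1) si unfolding Ch_def by simp
        ultimately show ?thesis by simp
      qed
      also have "\<dots> = g i" unfolding g_def using si by simp
      finally show ?thesis using gj by simp
    qed
    show ?thesis
    proof (rule inj_onI, rule ccontr)
      fix i j assume "i \<in> Ch" "j \<in> Ch" "g i = g j" "i \<noteq> j"
      thus False
      proof (cases "i < j")
        case True thus False using lt[of i j] \<open>i \<in> Ch\<close> \<open>j \<in> Ch\<close> \<open>g i = g j\<close> by blast
      next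
        case False hence "j < i" using \<open>i \<noteq> j\<close> by simp
        thus False using lt[of j i] \<open>i \<in> Ch\<close> \<open>j \<in> Ch\<close> \<open>g i = g j\<close> by simp
      qed
    qed
  qed
  have gV: "g ` Ch \<subseteq> V"
  proof
    fix y assume "y \<in> g ` Ch"
    then obtain i where "i \<in> Ch" "y = g i" by blast
    hence y: "y = f (p (Suc i mod n))" unfolding g_def F_def by simp
    have "Suc i mod n \<in> {..<n}" using n by simp
    hence "p (Suc i mod n) \<in> {..<n}" using bij_betwE[OF bij] by blast
    hence "y \<in> f ` {..<n}" using y by blast
    thus "y \<in> V" using V(1) by blast
  qed
  have cCh: "card Ch \<le> card V"
    using card_image[OF ginj] card_mono[OF V(2) gV] by simp
  have finCh: "finite Ch" unfolding Ch_def by simp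
  have "OPT n (cst E k f) \<le> tour_len (cst E k f) (tedge n p ` {..<n})"
    using bij n by (intro OPT_le) (auto simp: is_tour_alt)
  also have "\<dots> = (\<Sum>i<n. cst E k f (tedge n p i))" by (rule tour_len_sum[OF bij n])
  also have "\<dots> \<le> (\<Sum>i<n. if i \<in> Ch then real k else 0)"
  proof (rule sum_mono)
    fix i assume i: "i \<in> {..<n}"
    have ce: "cst E k f (tedge n p i) = real (gd E k (F i) (F (Suc i mod n)))"
      unfolding tedge_def cst_pair F_def ..
    show "cst E k f (tedge n p i) \<le> (if i \<in> Ch then real k else 0)"
    proof (cases "i \<in> Ch")
      case True thus ?thesis using ce gd_le by simp
    next
      case False hence "F i = F (Suc i mod n)" using i unfolding Ch_def by simp
      thus ?thesis using ce False gd_refl by simp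
    qed
  qed
  also have "\<dots> = real k * real (card Ch)"
  proof -
    have "Ch \<subseteq> {..<n}" unfolding Ch_def by auto
    hence CC: "{..<n} \<inter> Ch = Ch" by auto
    have "(\<Sum>i<n. if i \<in> Ch then real k else 0) = (\<Sum>i\<in>{..<n} \<inter> Ch. real k)"
      by (rule sum.inter_restrict[symmetric]) simp
    hence "(\<Sum>i<n. if i \<in> Ch then real k else 0) = (\<Sum>i\<in>Ch. real k)" unfolding CC .
    thus ?thesis by simp
  qed
  also have "\<dots> \<le> real k * real (card V)" using cCh by (intro mult_left_mono) auto
  finally show ?thesis .
qed

lemma instance_bound:
  fixes E :: "nat set set" and w :: "nat \<Rightarrow> nat"
  assumes k: "3 \<le> k" and finE: "finite E" and two: "\<forall>h\<in>E. card h = 2"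
    and girth: "girth_ge E (2 * k)" and tr: "trail E L w" and Ln: "L \<le> n"
  shows "ereal (real L / (real k * real (card (tverts L w)))) \<le> alpha k n"
proof -
  have L3: "3 \<le> L" using tr unfolding trail_def by simp
  have n3: "3 \<le> n" using L3 Ln by simp
  define f where "f = (\<lambda>i. if i < L then w i else w 0)"
  define c where "c = cst E k f"
  define T0 where "T0 = tedge n id ` {..<n}"
  have bij: "bij_betw id {..<n} {..<n}" by simp
  have T0: "is_tour n T0" unfolding T0_def is_tour_alt using n3 bij by blast
  have fS: "f (Suc i mod n) = (if i < L then w (Suc i mod L) else w 0)" if i: "i < n" for i
  proof (cases "i < L")
    case True
    show ?thesis
    proof (cases "Suc i < L")
      case True2: True
      hence "Suc i < n" using Ln by simp
      thus ?thesis using True True2 unfolding f_def by simp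
    next
      case False
      hence SL: "Suc i = L" using True by simp
      show ?thesis
      proof (cases "L < n")
        case True3: True
        thus ?thesis using SL True unfolding f_def by simp
      next
        case False3: False
        hence "Suc i = n" using SL Ln by simp
        thus ?thesis using SL True L3 unfolding f_def by simp
      qed
    qed
  next
    case False
    show ?thesis
    proof (cases "Suc i < n")
      case True thus ?thesis using False unfolding f_def by simp
    next
      case False2: False
      hence "Suc i = n" using i by simp
      thus ?thesis using False L3 unfolding f_def by simp
    qed
  qed
  have fimg: "f ` tedge n id i = (if i < L then tedge L w i else {w 0})" if i: "i < n" for i
  proof -
    have a: "f ` tedge n id i = {f i, f (Suc i mod n)}" unfolding tedge_def by simp
    have b: "f i = (if i < L then w i else w 0)" unfolding f_def by simp
    show ?thesis unfolding a b fS[OF i] by (cases "i < L") (simp_all add: tedge_def)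
  qed
  have w01: "w 0 \<noteq> w 1"
  proof -
    have "tedge L w 0 \<in> E" using tr L3 unfolding trail_def by simp
    moreover have "tedge L w 0 = {w 0, w 1}" using L3 unfolding tedge_def by simp
    ultimately have "card {w 0, w 1} = 2" using two by simp
    thus ?thesis by (cases "w 0 = w 1") auto
  qed
  have notE: "{w 0} \<notin> E" using two by force
  have hT: "\<forall>e\<in>T0. f ` e \<in> E \<or> card (f ` e) = 1"
  proof
    fix e assume "e \<in> T0"
    then obtain i where i: "i < n" "e = tedge n id i" unfolding T0_def by blast
    show "f ` e \<in> E \<or> card (f ` e) = 1"
      using fimg[OF i(1)] i tr unfolding trail_def by (cases "i < L") auto
  qed
  have injT: "inj_on (\<lambda>e. f ` e) {e\<in>T0. f ` e \<in> E}"
  proof (rule inj_onI)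
    fix e1 e2 assume e1: "e1 \<in> {e\<in>T0. f ` e \<in> E}" and e2: "e2 \<in> {e\<in>T0. f ` e \<in> E}"
      and eq: "f ` e1 = f ` e2"
    obtain i1 where i1: "i1 < n" "e1 = tedge n id i1" using e1 unfolding T0_def by blast
    obtain i2 where i2: "i2 < n" "e2 = tedge n id i2" using e2 unfolding T0_def by blast
    have l1: "i1 < L" using e1 fimg[OF i1(1)] i1 notE by (cases "i1 < L") auto
    have l2: "i2 < L" using e2 fimg[OF i2(1)] i2 notE by (cases "i2 < L") auto
    have "tedge L w i1 = tedge L w i2" using eq fimg[OF i1(1)] fimg[OF i2(1)] l1 l2 i1 i2 by simp
    hence "i1 = i2" using tr l1 l2 unfolding trail_def by (meson inj_on_eq_iff lessThan_iff)
    thus "e1 = e2" using i1 i2 by simp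
  qed
  have kop: "k_optimal k n c T0" unfolding c_def
    using kopt[OF _ finE two girth T0 hT injT] k by simp
  have cedge: "c (tedge n id i) = (if i < L then 1 else 0)" if i: "i < n" for i
  proof -
    have ce: "c (tedge n id i) = real (gd E k (f i) (f (Suc i mod n)))"
      unfolding c_def tedge_def cst_pair by simp
    show ?thesis
    proof (cases "i < L")
      case True
      have te: "{w i, w (Suc i mod L)} \<in> E" using tr True unfolding trail_def tedge_def by simp
      hence "card {w i, w (Suc i mod L)} = 2" using two by blast
      hence ne: "w i \<noteq> w (Suc i mod L)" by (cases "w i = w (Suc i mod L)") auto
      have "0 < gd E k (w i) (w (Suc i mod L))" using gd_pos[OF ne] k by simp
      moreover have "gd E k (w i) (w (Suc i mod L)) \<le> 1" using gd_edge[OF te] .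
      ultimately show ?thesis using ce fS[OF i] True unfolding f_def by simp
    next
      case False thus ?thesis using ce fS[OF i] gd_refl unfolding f_def by simp
    qed
  qed
  have lenT: "tour_len c T0 = real L"
  proof -
    have "tour_len c T0 = (\<Sum>i<n. c (tedge n id i))" unfolding T0_def by (rule tour_len_sum[OF bij n3])
    also have "\<dots> = (\<Sum>i<n. if i < L then 1 else 0)" using cedge by (intro sum.cong) auto
    also have "\<dots> = real L"
    proof -
      have "(\<Sum>i<n. (if i < L then 1 else 0)::real) = (\<Sum>i<n. (if i \<in> {..<L} then 1 else 0)::real)"
        by simp
      also have "\<dots> = (\<Sum>i\<in>{..<n} \<inter> {..<L}. 1)"
        by (rule sum.inter_restrict[symmetric]) simp
      finally have "(\<Sum>i<n. (if i < L then 1 else 0)::real) = (\<Sum>i\<in>{..<n} \<inter> {..<L}. 1)" .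
      moreover have "{..<n} \<inter> {..<L} = {..<L}" using Ln by auto
      ultimately show ?thesis by simp
    qed
    finally show ?thesis .
  qed
  define K where "K = card (tverts L w)"
  have fV: "f ` {..<n} \<subseteq> tverts L w" unfolding f_def tverts_def using L3 by auto
  have OPTle: "OPT n c \<le> real k * real K" unfolding c_def K_def
    by (rule OPT_bound[OF n3 fV]) (simp add: tverts_def)
  have OPTpos: "0 < OPT n c"
  proof -
    obtain T where T: "is_tour n T" "OPT n c = tour_len c T" using OPT_in[OF n3] by blast
    obtain p where p: "bij_betw p {..<n} {..<n}" "T = tedge n p ` {..<n}"
      using T(1) unfolding is_tour_alt by blast
    define F where "F = (\<lambda>i. f (p i))"
    have "\<exists>i<n. F i \<noteq> F (Suc i mod n)"
    proof (rule ccontr)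
      assume "\<not> (\<exists>i<n. F i \<noteq> F (Suc i mod n))"
      hence all: "\<forall>i<n. F i = F (Suc i mod n)" by blast
      have cst0: "\<forall>i<n. F i = F 0"
      proof (intro allI impI)
        fix i assume "i < n"
        thus "F i = F 0"
        proof (induction i)
          case 0 thus ?case by simp
        next
          case (Suc i)
          have i: "i < n" using Suc.prems by simp
          have m: "Suc i mod n = Suc i" using Suc.prems by simp
          have "F i = F (Suc i mod n)" using all i by blast
          hence h1: "F i = F (Suc i)" unfolding m .
          have h2: "F i = F 0" using Suc.IH i by blast
          show ?case using h1 h2 by simp
        qed
      qed
      have "f v = F 0" if vn: "v < n" for v
      proof -
        obtain j where j: "j < n" "p j = v" using p(1) vn by (metis bij_betw_iff_bijections lessThan_iff)
        have "F j = F 0" using cst0 j(1) by blast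
        thus ?thesis using j(2) unfolding F_def by simp
      qed
      hence "f 0 = f 1" using n3 by simp
      thus False using w01 L3 unfolding f_def by simp
    qed
    then obtain i where i: "i < n" "F i \<noteq> F (Suc i mod n)" by blast
    have nn: "\<forall>j\<in>{..<n}. 0 \<le> c (tedge n p j)" unfolding c_def cst_def by simp
    have "c (tedge n p i) = real (gd E k (F i) (F (Suc i mod n)))"
      unfolding c_def tedge_def cst_pair F_def ..
    hence ci: "0 < c (tedge n p i)" using gd_pos[OF i(2)] k by simp
    have "c (tedge n p i) \<le> (\<Sum>j<n. c (tedge n p j))"
      using nn i(1) by (intro member_le_sum) auto
    hence "0 < (\<Sum>j<n. c (tedge n p j))" using ci by linarith
    thus ?thesis using T(2) p tour_len_sum[OF p(1) n3] by simp
  qed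
  have mem: "(c, T0) \<in> {(c, T). metric_inst n c \<and> OPT n c > 0 \<and> k_optimal k n c T}"
    using metric_cst[of n E k f] OPTpos kop unfolding c_def by simp
  have "ereal (tour_len c T0 / OPT n c) \<le> alpha k n"
    unfolding alpha_def using SUP_upper[OF mem, of "\<lambda>cT. ereal (tour_len (fst cT) (snd cT) / OPT n (fst cT))"]
    by simp
  moreover have "real L / (real k * real K) \<le> tour_len c T0 / OPT n c"
    unfolding lenT using OPTle OPTpos by (intro divide_left_mono) auto
  ultimately show ?thesis unfolding K_def by (meson ereal_less_eq(3) order_trans)
qed

lemma alpha_ge_1:
  assumes n: "3 \<le> n" shows "1 \<le> alpha k n"
proof -
  define c where "c = (\<lambda>e::nat set. 1::real)"
  have len: "tour_len c T = real n" if "is_tour n T" for T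
    unfolding tour_len_def c_def using tour_card[OF that] by simp
  obtain T where T: "is_tour n T" "OPT n c = tour_len c T" using OPT_in[OF n] by blast
  have opt: "OPT n c = real n" using T len by simp
  have met: "metric_inst n c" unfolding metric_inst_def c_def by simp
  have kop: "k_optimal k n c T" unfolding k_optimal_def k_move_def using T(1) len by auto
  have mem: "(c, T) \<in> {(c, T). metric_inst n c \<and> OPT n c > 0 \<and> k_optimal k n c T}"
    using met kop opt n by simp
  have "ereal (tour_len c T / OPT n c) \<le> alpha k n"
    unfolding alpha_def using SUP_upper[OF mem, of "\<lambda>cT. ereal (tour_len (fst cT) (snd cT) / OPT n (fst cT))"]
    by simp
  moreover have "tour_len c T / OPT n c = 1" using len[OF T(1)] opt n by simp
  ultimately show ?thesis by (simp add: one_ereal_def)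
qed

lemma matching_girth:
  "girth_ge ((\<lambda>i. {2 * i, 2 * i + 1}) ` {..<m}) g"
  unfolding girth_ge_def
proof (intro allI impI notI)
  fix l assume "has_cycle_len ((\<lambda>i. {2 * i, 2 * i + 1}) ` {..<m}) l"
  then obtain v where v: "3 \<le> l" "inj_on v {..<l}"
    "\<forall>i<l. {v i, v (Suc i mod l)} \<in> (\<lambda>i. {2 * i, 2 * i + 1}) ` {..<m}"
    unfolding has_cycle_len_def by blast
  have uniq: "x \<in> {2 * a, 2 * a + 1} \<Longrightarrow> x \<in> {2 * b, 2 * b + 1} \<Longrightarrow> a = b" for x a b :: nat
    by auto
  obtain a where a: "{v 0, v 1} = {2 * a, 2 * a + 1}"
    using v(1) v(3)[rule_format, of 0] by auto
  obtain b where b: "{v (l - 1), v 0} = {2 * b, 2 * b + 1}"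
  proof -
    have "Suc (l - 1) mod l = 0" using v(1) by simp
    moreover have "l - 1 < l" using v(1) by simp
    ultimately show ?thesis using v(3)[rule_format, of "l - 1"] that by auto
  qed
  have "a = b" using uniq[of "v 0" a b] a b by blast
  hence "{v 0, v 1} = {v (l - 1), v 0}" using a b by simp
  hence "v 1 = v (l - 1) \<or> v 0 = v 1" by (auto simp: doubleton_eq_iff)
  moreover have "v 0 \<noteq> v 1" using inj_onD[OF v(2), of 0 1] v(1) by auto
  ultimately have "v 1 = v (l - 1)" by simp
  hence "1 = l - 1" using inj_onD[OF v(2), of 1 "l - 1"] v(1) by simp
  thus False using v(1) by simp
qed

lemma exinv_graph:
  "\<exists>E. E \<subseteq> edges_Kn (exinv m g) \<and> card E = m \<and> girth_ge E g"
proof -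
  define M where "M = (\<lambda>i. {2 * i, 2 * i + 1}) ` {..<m}"
  have "M \<subseteq> edges_Kn (2 * m)" unfolding M_def edges_Kn_def by force
  moreover have "card M = m"
  proof -
    have "inj_on (\<lambda>i::nat. {2 * i, 2 * i + 1}) {..<m}" by (rule inj_onI) (auto simp: doubleton_eq_iff)
    thus ?thesis unfolding M_def by (simp add: card_image)
  qed
  moreover have "girth_ge M g" unfolding M_def by (rule matching_girth)
  ultimately have "\<exists>N E. E \<subseteq> edges_Kn N \<and> card E = m \<and> girth_ge E g" by blast
  thus ?thesis unfolding exinv_def by (rule LeastI_ex)
qed

lemma edges_Kn_props:
  "finite (edges_Kn N)" "e \<in> edges_Kn N \<Longrightarrow> card e = 2" "e \<in> edges_Kn N \<Longrightarrow> e \<subseteq> {..<N}"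
proof -
  have "edges_Kn N \<subseteq> Pow {..<N}" unfolding edges_Kn_def by auto
  thus "finite (edges_Kn N)" by (rule finite_subset) simp
  show "e \<in> edges_Kn N \<Longrightarrow> card e = 2" unfolding edges_Kn_def by auto
  show "e \<in> edges_Kn N \<Longrightarrow> e \<subseteq> {..<N}" unfolding edges_Kn_def by auto
qed

theorem theorem3p4:
  fixes k :: nat
  assumes "k \<ge> 3"
  shows "\<exists>C>0. \<forall>\<^sub>F n in sequentially.
           ereal (C * real n / real (exinv n (2 * k))) \<le> alpha k n"
proof (intro exI[of _ "1 / (2 * real k)"] conjI)
  show "0 < 1 / (2 * real k)" using assms by simp
  show "\<forall>\<^sub>F n in sequentially. ereal (1 / (2 * real k) * real n / real (exinv n (2 * k))) \<le> alpha k n"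
  proof (rule eventually_sequentiallyI[of 3])
    fix n :: nat assume n3: "3 \<le> n"
    define N where "N = exinv n (2 * k)"
    obtain E where E: "E \<subseteq> edges_Kn N" "card E = n" "girth_ge E (2 * k)"
      using exinv_graph[of n "2 * k"] unfolding N_def by blast
    have finE: "finite E" using E(1) edges_Kn_props(1) finite_subset by blast
    have two: "\<forall>h\<in>E. card h = 2" using E(1) edges_Kn_props(2) by blast
    have VN: "\<Union>E \<subseteq> {..<N}" using E(1) edges_Kn_props(3) by blast
    have Npos: "0 < N"
    proof (rule ccontr)
      assume "\<not> 0 < N"
      hence "N = 0" by simp
      moreover have "edges_Kn 0 = {}" unfolding edges_Kn_def by simp
      ultimately have "E = {}" using E(1) by simp
      thus False using E(2) n3 by simp
    qed
    have kpos: "0 < real k" using assms by simp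
    show "ereal (1 / (2 * real k) * real n / real N) \<le> alpha k n"
    proof (cases "2 * N \<le> n")
      case False
      have "1 / (2 * real k) * real n / real N \<le> 1"
      proof -
        have "real n \<le> 2 * real N" using False by simp
        hence "real n / real N \<le> 2" using Npos by (simp add: divide_le_eq)
        moreover have "1 / (2 * real k) \<le> 1 / 2" using assms by (simp add: divide_le_eq)
        ultimately have "1 / (2 * real k) * (real n / real N) \<le> 1 / 2 * 2"
          by (intro mult_mono) auto
        thus ?thesis by simp
      qed
      hence "ereal (1 / (2 * real k) * real n / real N) \<le> 1" by (simp add: one_ereal_def)
      thus ?thesis using alpha_ge_1[OF n3, of k] by (rule order_trans)
    next
      case True
      have NE: "N < card E" using True Npos E(2) by simp
      obtain L w where tr: "trail E L w" and bd: "(card E - N) * card (tverts L w) \<le> L * N"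
        using best_trail[OF finE two VN NE] by blast
      define K where "K = card (tverts L w)"
      have Ln: "L \<le> n"
      proof -
        have "card (tedges L w) \<le> card E" using trail_sub[OF tr] finE by (rule card_mono[rotated])
        thus ?thesis using card_tedges[OF tr] E(2) by simp
      qed
      have Kpos: "0 < K"
      proof -
        have "0 < L" using tr unfolding trail_def by simp
        hence "w 0 \<in> tverts L w" unfolding tverts_def by simp
        thus ?thesis unfolding K_def tverts_def by (auto simp: card_gt_0_iff)
      qed
      have main: "ereal (real L / (real k * real K)) \<le> alpha k n"
        unfolding K_def by (rule instance_bound[OF assms finE two E(3) tr Ln])
      have "1 / (2 * real k) * real n / real N \<le> real L / (real k * real K)"
      proof -
        have b1: "(real n - real N) * real K \<le> real L * real N"
        proof -
          have "(n - N) * K \<le> L * N" using bd E(2) unfolding K_def by simp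
          hence "real ((n - N) * K) \<le> real (L * N)" by (simp only: of_nat_le_iff)
          thus ?thesis using True by (simp add: of_nat_diff)
        qed
        have "real n * real K \<le> 2 * ((real n - real N) * real K)"
        proof -
          have "real n \<le> 2 * (real n - real N)" using True by simp
          thus ?thesis using Kpos by (simp add: algebra_simps)
        qed
        hence nk: "real n * real K \<le> 2 * real L * real N" using b1 by simp
        have "1 / (2 * real k) * real n / real N = (real n * real K) / (2 * real k * real N * real K)"
          using Kpos Npos kpos by (simp add: field_simps)
        also have "\<dots> \<le> (2 * real L * real N) / (2 * real k * real N * real K)"
          using nk Kpos Npos kpos by (intro divide_right_mono) auto
        also have "\<dots> = real L / (real k * real K)"
          using Kpos Npos kpos by (simp add: field_simps)
        finally show ?thesis .
      qed
      hence "ereal (1 / (2 * real k) * real n / real N) \<le> ereal (real L / (real k * real K))" by simp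
      thus ?thesis using main by (rule order_trans)
    qed
  qed
qed

end
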